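(* Let $p>1$ and let $\omega\ge0$ be a weight on $\mathbb R$ with $\log\omega\in B_p^{\mathbb R}(\mathbb R)$. Then $\log\omega$ lies in the closure of $L^\infty(\mathbb R)$ with respect to the BMO norm $\|\cdot\|_*$. In particular $\omega\in A_2\subset A_\infty$.
   Context: $B_p^{\mathbb R}(\mathbb R)$ is the set of real measurable $u$ on $\mathbb R$ with $\int\!\int\frac{|u(t)-u(s)|^p}{|t-s|^2}dsdt<\infty$. $\|u\|_*=\sup_I|I|^{-1}\int_I|u-u_I|$ over bounded intervals, $u_I$ the mean over $I$. A weight is a locally integrable $\omega\ge0$; $\omega\in A_2$ if $\sup_I\left(|I|^{-1}\int_I\omega\right)\left(|I|^{-1}\int_I\omega^{-1}\right)<\infty$; $A_\infty=\bigcup_{p>1}A_p$ with $A_p$ the Muckenhoupt classes. *)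

theory Defs
  imports "HOL-Analysis.Analysis"
begin

definition loc_integrable :: "(real \<Rightarrow> real) \<Rightarrow> bool" where
  "loc_integrable u \<longleftrightarrow> (\<forall>a b. set_integrable lborel {a..b} u)"

definition is_weight :: "(real \<Rightarrow> real) \<Rightarrow> bool" where
  "is_weight w \<longleftrightarrow> (\<forall>t. 0 \<le> w t) \<and> loc_integrable w"

definition mean_on :: "(real \<Rightarrow> real) \<Rightarrow> real \<Rightarrow> real \<Rightarrow> real" where
  "mean_on u a b = (LBINT t:{a..b}. u t) / (b - a)"

definition mean_osc :: "(real \<Rightarrow> real) \<Rightarrow> real \<Rightarrow> real \<Rightarrow> real" where
  "mean_osc u a b = (LBINT t:{a..b}. \<bar>u t - mean_on u a b\<bar>) / (b - a)"

text \<open>BMO seminorm \<open>\<parallel>u\<parallel>_*\<close> (supremum over bounded intervals), in the extended reals;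
  only meaningful for locally integrable u.\<close>
definition bmo_norm :: "(real \<Rightarrow> real) \<Rightarrow> ereal" where
  "bmo_norm u = (SUP I \<in> {(a, b). a < (b::real)}. ereal (mean_osc u (fst I) (snd I)))"

definition in_BMO_closure_Linf :: "(real \<Rightarrow> real) \<Rightarrow> bool" where
  "in_BMO_closure_Linf u \<longleftrightarrow> loc_integrable u \<and>
     (\<forall>\<epsilon>>0. \<exists>g. g \<in> borel_measurable lborel \<and> bounded (range g) \<and>
        loc_integrable (\<lambda>t. u t - g t) \<and> bmo_norm (\<lambda>t. u t - g t) < ereal \<epsilon>)"

definition Bp_real :: "real \<Rightarrow> (real \<Rightarrow> real) set" where
  "Bp_real p = {u. u \<in> borel_measurable lborel \<and>
     (\<integral>\<^sup>+ t. \<integral>\<^sup>+ s. ennreal (\<bar>u t - u s\<bar> powr p / \<bar>t - s\<bar>\<^sup>2) \<partial>lborel \<partial>lborel) < \<infinity>}"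

text \<open>The dual integral is taken as an extended nonnegative integral, with w^{-1/(p-1)} = \<infinity> where w = 0.\<close>
definition dual_weight :: "real \<Rightarrow> (real \<Rightarrow> real) \<Rightarrow> real \<Rightarrow> ennreal" where
  "dual_weight p w t = (if 0 < w t then ennreal (w t powr (-1 / (p - 1))) else \<infinity>)"

definition A_p :: "real \<Rightarrow> (real \<Rightarrow> real) set" where
  "A_p p = {w. is_weight w \<and>
     (\<exists>C::real. \<forall>a b. a < b \<longrightarrow>
        (\<integral>\<^sup>+ t\<in>{a..b}. dual_weight p w t \<partial>lborel) < \<infinity> \<and>
        mean_on w a b * (enn2real (\<integral>\<^sup>+ t\<in>{a..b}. dual_weight p w t \<partial>lborel) / (b - a)) powr (p - 1) \<le> C)}"

abbreviation A_2 :: "(real \<Rightarrow> real) set" where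
  "A_2 \<equiv> A_p 2"

definition A_infty :: "(real \<Rightarrow> real) set" where
  "A_infty = (\<Union>p\<in>{p. 1 < p}. A_p p)"

end

theory Submission
  imports Defs
begin

lemma pt_bound:
  fixes x e p :: real
  assumes "0 \<le> x" "0 < e" "1 < p"
  shows "x \<le> e + e powr (1 - p) * x powr p"
proof (cases "x \<le> e")
  case True
  then show ?thesis by (simp add: add_increasing2)
next
  case False
  then have xe: "e < x" by simp
  have "e powr (1 - p) * x powr p = x * (x / e) powr (p - 1)"
    using xe assms by (simp add: powr_divide powr_diff powr_minus divide_simps)
  moreover have "(x / e) powr (p - 1) \<ge> 1"
    using xe assms by (intro ge_one_powr_ge_zero) auto
  ultimately have "x \<le> e powr (1 - p) * x powr p"
    using xe assms by (metis dual_order.strict_trans2 less_eq_real_def mult_le_cancel_left1 not_le)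
  then show ?thesis using assms by simp
qed

lemma eps_opt:
  fixes X A p :: real
  assumes "1 < p" "0 \<le> A" "\<And>e. 0 < e \<Longrightarrow> X \<le> e + e powr (1 - p) * A"
  shows "X \<le> 2 * A powr (1 / p)"
proof (cases "A = 0")
  case True
  then have "\<And>e. 0 < e \<Longrightarrow> X \<le> e" using assms(3) by simp
  then have "X \<le> 0" by (meson dense not_le)
  then show ?thesis using True by simp
next
  case False
  then have Ap: "0 < A" using assms by simp
  have "(A powr (1/p)) powr (1 - p) * A = A powr (1/p)"
  proof -
    have "(A powr (1/p)) powr (1 - p) * A = A powr ((1/p) * (1 - p)) * A powr 1"
      using Ap by (simp only: powr_powr powr_one_gt_zero_iff) simp
    also have "\<dots> = A powr ((1/p) * (1 - p) + 1)" using Ap by (simp add: powr_add)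
    also have "(1/p) * (1 - p) + 1 = 1/p" using assms by (simp add: field_simps)
    finally show ?thesis .
  qed
  then show ?thesis using assms(3)[of "A powr (1/p)"] Ap by simp
qed

lemma power_mean2:
  fixes A B p :: real
  assumes "1 \<le> p" "0 \<le> A" "0 \<le> B"
  shows "((A + B) / 2) powr p \<le> (A powr p + B powr p) / 2"
proof -
  have one: "(C / 2) powr p \<le> C powr p / 2" if "0 \<le> C" for C :: real
  proof -
    have "(C / 2) powr p = C powr p / 2 powr p" using that by (simp add: powr_divide)
    moreover have "2 powr p \<ge> 2 powr 1" using assms by (intro powr_mono) auto
    moreover have "C powr p * 2 \<le> C powr p * 2 powr p"
      using calculation(2) by (intro mult_left_mono) auto
    ultimately show ?thesis using that
      by (simp add: divide_le_eq)
  qed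
  show ?thesis
  proof (cases "A = 0 \<or> B = 0")
    case True
    then show ?thesis using one assms by auto
  next
    case False
    then have "A > 0" "B > 0" using assms by auto
    have "((1 - 1/2) *\<^sub>R A + (1/2) *\<^sub>R B) powr p \<le> (1 - 1/2) * A powr p + (1/2) * B powr p"
      by (rule convex_onD[OF powr_convex[OF assms(1)]]) (use \<open>A > 0\<close> \<open>B > 0\<close> in auto)
    moreover have "(1 - 1/2) *\<^sub>R A + (1/2) *\<^sub>R B = (A + B) / 2" by simp
    ultimately show ?thesis by (simp add: add_divide_distrib)
  qed
qed

definition Kc :: "real \<Rightarrow> real" where "Kc p = 4 / (1 - 2 powr (-1/p))"

lemma exp_half_bounds:
  fixes y :: real
  assumes "0 \<le> y" "y \<le> 1/2"
  shows "exp y \<le> 1 + 2 * y" "exp (-y) \<le> 1" "exp y + exp (-y) \<le> 2 + 2 * y^2"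
proof -
  have e1: "exp y \<le> 1 + y + y^2" using exp_bound[of y] assms by auto
  moreover have "y^2 \<le> y * (1/2)" using assms unfolding power2_eq_square by (intro mult_left_mono) auto
  ultimately show "exp y \<le> 1 + 2 * y" using assms by linarith
  show "exp (-y) \<le> 1" using assms by simp
  have "exp (-y) = 1 / exp y" by (simp add: exp_minus field_simps)
  also have "\<dots> \<le> 1 / (1 + y)" using assms by (intro divide_left_mono) auto
  also have "\<dots> \<le> 1 - y + y^2"
  proof -
    have "(1 + y) * (1 - y + y^2) = 1 + y^3" by (simp add: algebra_simps power2_eq_square power3_eq_cube)
    moreover have "y^3 \<ge> 0" using assms by simp
    ultimately have "1 \<le> (1 + y) * (1 - y + y^2)" by simp
    then show ?thesis using assms by (simp add: divide_le_eq mult.commute)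
  qed
  finally show "exp y + exp (-y) \<le> 2 + 2 * y^2" using e1 by simp
qed

lemma tree_ineq:
  fixes p d e1 e2 e12 e :: real
  assumes p: "1 < p" and nn: "0 \<le> e1" "0 \<le> e2" "0 \<le> e12" and sum: "e1 + e2 + e12 \<le> e"
    and dsm: "\<bar>d\<bar> \<le> 2 * (4 * e12) powr (1/p)" and d1: "\<bar>d\<bar> \<le> 1"
    and d2: "\<bar>d\<bar> \<le> (2 powr (1/p) - 1) / 2"
  shows "(exp (d/2) * (1 + Kc p * e1 powr (1/p)) + exp (-d/2) * (1 + Kc p * e2 powr (1/p))) / 2
         \<le> 1 + Kc p * e powr (1/p)"
proof -
  define q where "q = 1 / p"
  have q: "0 < q" "q < 1" using p by (auto simp: q_def)
  define s2 where "s2 = 2 powr (-q)"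
  have "2 powr (-q) < 2 powr 0" using q by (intro powr_less_mono) auto
  then have s2: "0 < s2" "s2 < 1" by (auto simp: s2_def)
  define th where "th = (1 + s2) / 2"
  have K: "Kc p = 2 / (1 - th)" unfolding Kc_def th_def s2_def q_def by (simp add: field_simps)
  have Kpos: "Kc p > 0" using K s2 th_def by simp
  define A where "A = e1 powr q"
  define B where "B = e2 powr q"
  define be where "be = e12 powr q"
  define sg where "sg = (e1 + e2) powr q"
  define rh where "rh = e powr q"
  have ABnn: "0 \<le> A" "0 \<le> B" "0 \<le> be" by (auto simp: A_def B_def be_def)
  have y: "0 \<le> \<bar>d\<bar>/2" "\<bar>d\<bar>/2 \<le> 1/2" using d1 by auto
  have ex1: "exp (d/2) \<le> 1 + \<bar>d\<bar>" "exp (-d/2) \<le> 1 + \<bar>d\<bar>"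
  proof -
    have "exp (\<bar>d\<bar>/2) \<le> 1 + \<bar>d\<bar>" using exp_half_bounds(1)[OF y] by simp
    moreover have "exp (d/2) \<le> exp (\<bar>d\<bar>/2)" "exp (-d/2) \<le> exp (\<bar>d\<bar>/2)" by auto
    ultimately show "exp (d/2) \<le> 1 + \<bar>d\<bar>" "exp (-d/2) \<le> 1 + \<bar>d\<bar>" by linarith+
  qed
  have ex2: "exp (d/2) + exp (-d/2) \<le> 2 + d^2/2"
    using exp_half_bounds(3)[OF y]
    by (cases "d \<ge> 0") (auto simp: power2_eq_square add.commute)
  have "(4 * e12) powr q = 4 powr q * be" using nn by (simp add: be_def powr_mult)
  moreover have "4 powr q \<le> 4 powr 1" using q by (intro powr_mono) auto
  moreover have "4 powr q * be \<le> 4 powr 1 * be" using calculation(2) ABnn by (intro mult_right_mono) auto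
  ultimately have "\<bar>d\<bar> \<le> 8 * be" using dsm unfolding q_def by simp
  moreover have "d^2 \<le> \<bar>d\<bar>"
  proof -
    have "d^2 = \<bar>d\<bar> * \<bar>d\<bar>" by (simp add: power2_eq_square)
    also have "\<dots> \<le> \<bar>d\<bar> * 1" using d1 by (intro mult_left_mono) auto
    finally show ?thesis by simp
  qed
  ultimately have dbe: "d^2/4 \<le> 2 * be" by linarith
  have "((A + B)/2) powr p \<le> (A powr p + B powr p)/2"
    using power_mean2[of p A B] p ABnn by simp
  moreover have "A powr p = e1" "B powr p = e2"
    using nn p by (auto simp: A_def B_def q_def powr_powr)
  ultimately have "((A + B)/2) powr p \<le> (e1 + e2) / 2" by metis
  then have "(((A + B)/2) powr p) powr q \<le> ((e1 + e2) / 2) powr q"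
    using q by (intro powr_mono2) auto
  moreover have "(((A + B)/2) powr p) powr q = (A + B)/2"
    using ABnn p by (simp add: powr_powr q_def)
  moreover have "((e1 + e2) / 2) powr q = s2 * sg"
    using nn by (simp add: powr_divide sg_def s2_def powr_minus_divide)
  ultimately have pm: "(A + B)/2 \<le> s2 * sg" by linarith
  have dth: "(1 + \<bar>d\<bar>) * s2 \<le> th"
  proof -
    have "2 powr q * s2 = 1" using s2_def by (simp add: powr_minus_divide)
    moreover have "1 + 2 * \<bar>d\<bar> \<le> 2 powr q" using d2 unfolding q_def by simp
    ultimately have "(1 + 2 * \<bar>d\<bar>) * s2 \<le> 1" using s2 mult_right_mono[of "1 + 2 * \<bar>d\<bar>" "2 powr q" s2] by simp
    moreover obtain X where X: "X = \<bar>d\<bar> * s2" by blast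
    moreover have e1: "(1 + 2 * \<bar>d\<bar>) * s2 = s2 + 2 * X" "(1 + \<bar>d\<bar>) * s2 = s2 + X"
      by (simp_all add: algebra_simps X)
    ultimately have "s2 + 2 * X \<le> 1" by simp
    then have "s2 + X \<le> (1 + s2) / 2" by (simp add: field_simps)
    then show ?thesis unfolding th_def using \<open>(1 + \<bar>d\<bar>) * s2 = s2 + X\<close> by simp
  qed
  have mono1: "sg \<le> rh" "be \<le> rh" using nn sum q
    by (auto simp: sg_def rh_def be_def intro!: powr_mono2)
  have "(exp (d/2) * (1 + Kc p * A) + exp (-d/2) * (1 + Kc p * B)) / 2
       = (exp (d/2) + exp (-d/2))/2 + Kc p * (exp (d/2) * A + exp (-d/2) * B) / 2"
    by (simp add: algebra_simps add_divide_distrib)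
  also have "\<dots> \<le> (1 + d^2/4) + Kc p * ((1 + \<bar>d\<bar>) * (A + B)) / 2"
  proof -
    have "exp (d/2) * A + exp (-d/2) * B \<le> (1 + \<bar>d\<bar>) * A + (1 + \<bar>d\<bar>) * B"
      using ex1 ABnn by (intro add_mono mult_right_mono) auto
    also have "\<dots> = (1 + \<bar>d\<bar>) * (A + B)" by (simp add: algebra_simps)
    finally have "Kc p * (exp (d/2) * A + exp (-d/2) * B) \<le> Kc p * ((1 + \<bar>d\<bar>) * (A + B))"
      using Kpos by (intro mult_left_mono) auto
    then have "Kc p * (exp (d/2) * A + exp (-d/2) * B) / 2 \<le> Kc p * ((1 + \<bar>d\<bar>) * (A + B)) / 2"
      by (rule divide_right_mono) simp
    moreover have "(exp (d/2) + exp (-d/2))/2 \<le> 1 + d^2/4" using ex2 by (simp add: field_simps)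
    ultimately show ?thesis by (rule add_mono[rotated])
  qed
  also have "\<dots> \<le> 1 + 2 * be + Kc p * th * sg"
  proof -
    have "(1 + \<bar>d\<bar>) * (A + B) / 2 = (1 + \<bar>d\<bar>) * ((A + B) / 2)" by simp
    also have "\<dots> \<le> (1 + \<bar>d\<bar>) * (s2 * sg)"
      using pm by (intro mult_left_mono) auto
    also have "\<dots> = ((1 + \<bar>d\<bar>) * s2) * sg" by simp
    also have "\<dots> \<le> th * sg" using dth by (intro mult_right_mono) (auto simp: sg_def)
    finally have "Kc p * ((1 + \<bar>d\<bar>) * (A + B) / 2) \<le> Kc p * (th * sg)"
      using Kpos by (intro mult_left_mono) auto
    then show ?thesis using dbe by (simp add: mult.assoc)
  qed
  also have "\<dots> \<le> 1 + Kc p * rh"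
  proof -
    have th1: "th < 1" using s2 th_def by simp
    have Kth: "Kc p * (1 - th) = 2" using K th1 by (simp add: field_simps)
    have "Kc p * rh = Kc p * th * rh + Kc p * (1 - th) * rh" by (simp add: algebra_simps)
    then have "Kc p * rh = Kc p * th * rh + 2 * rh" using Kth by simp
    moreover have "Kc p * th * sg \<le> Kc p * th * rh" using mono1 Kpos th_def s2
      by (intro mult_left_mono) auto
    ultimately show ?thesis using mono1 by linarith
  qed
  finally show ?thesis by (simp add: A_def B_def rh_def q_def)
qed

definition kern :: "(real \<Rightarrow> real) \<Rightarrow> real \<Rightarrow> real \<Rightarrow> real \<Rightarrow> ennreal" where
  "kern v p t s = ennreal (\<bar>v t - v s\<bar> powr p / \<bar>t - s\<bar>^2)"

definition En :: "(real \<Rightarrow> real) \<Rightarrow> real \<Rightarrow> real set \<Rightarrow> real set \<Rightarrow> ennreal" where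
  "En v p A B = (\<integral>\<^sup>+t. (\<integral>\<^sup>+s. kern v p t s * indicator B s \<partial>lborel) * indicator A t \<partial>lborel)"

definition dbl :: "(real \<Rightarrow> real) \<Rightarrow> real set \<Rightarrow> real set \<Rightarrow> ennreal" where
  "dbl v A B = (\<integral>\<^sup>+t. (\<integral>\<^sup>+s. ennreal \<bar>v t - v s\<bar> * indicator B s \<partial>lborel) * indicator A t \<partial>lborel)"

lemma kern_meas:
  assumes [measurable]: "v \<in> borel_measurable borel"
  shows "(\<lambda>z. kern v p (fst z) (snd z)) \<in> borel_measurable (lborel \<Otimes>\<^sub>M lborel)"
  unfolding kern_def by measurable

lemma kern_meas2:
  assumes [measurable]: "v \<in> borel_measurable borel"
  shows "(\<lambda>s. kern v p t s) \<in> borel_measurable borel"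
  unfolding kern_def by measurable

lemma inner_meas:
  assumes [measurable]: "v \<in> borel_measurable borel" and [measurable]: "B \<in> sets borel"
  shows "(\<lambda>t. \<integral>\<^sup>+s. kern v p t s * indicator B s \<partial>lborel) \<in> borel_measurable borel"
proof -
  have "(\<lambda>(t, s). kern v p t s * indicator B s) \<in> borel_measurable (lborel \<Otimes>\<^sub>M lborel)"
    unfolding kern_def by measurable
  from lborel.borel_measurable_nn_integral[OF this] show ?thesis by simp
qed

lemma inner_meas_abs:
  assumes [measurable]: "v \<in> borel_measurable borel" and [measurable]: "B \<in> sets borel"
  shows "(\<lambda>t. \<integral>\<^sup>+s. ennreal \<bar>v t - v s\<bar> * indicator B s \<partial>lborel) \<in> borel_measurable borel"
proof -
  have "(\<lambda>(t, s). ennreal \<bar>v t - v s\<bar> * indicator B s) \<in> borel_measurable (lborel \<Otimes>\<^sub>M lborel)"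
    by measurable
  from lborel.borel_measurable_nn_integral[OF this] show ?thesis by simp
qed

lemma nn_split:
  fixes x m y :: real
  assumes "x \<le> m" "m \<le> y" and [measurable]: "f \<in> borel_measurable borel"
  shows "(\<integral>\<^sup>+t. f t * indicator {x..y} t \<partial>lborel)
       = (\<integral>\<^sup>+t. f t * indicator {x..m} t \<partial>lborel) + (\<integral>\<^sup>+t. f t * indicator {m..y} t \<partial>lborel)"
proof -
  have "AE t in lborel. f t * indicator {x..y} t = f t * indicator {x..m} t + f t * indicator {m..y} t"
  proof (rule eventually_mono[OF AE_lborel_singleton[of m]])
    fix t :: real assume "t \<noteq> m"
    then have "indicator {x..y} t = (indicator {x..m} t + indicator {m..y} t :: ennreal)"
      using assms by (auto simp: indicator_def)
    then show "f t * indicator {x..y} t = f t * indicator {x..m} t + f t * indicator {m..y} t"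
      by (simp add: distrib_left)
  qed
  then have "(\<integral>\<^sup>+t. f t * indicator {x..y} t \<partial>lborel)
      = (\<integral>\<^sup>+t. f t * indicator {x..m} t + f t * indicator {m..y} t \<partial>lborel)"
    by (rule nn_integral_cong_AE)
  also have "\<dots> = (\<integral>\<^sup>+t. f t * indicator {x..m} t \<partial>lborel) + (\<integral>\<^sup>+t. f t * indicator {m..y} t \<partial>lborel)"
    by (rule nn_integral_add) auto
  finally show ?thesis .
qed

lemma En_super:
  assumes "x \<le> m" "m \<le> y" and v[measurable]: "v \<in> borel_measurable borel"
  shows "En v p {x..m} {x..m} + En v p {m..y} {m..y} + En v p {x..m} {m..y} \<le> En v p {x..y} {x..y}"
proof -
  define I where "I B t = (\<integral>\<^sup>+s. kern v p t s * indicator B s \<partial>lborel)" for B t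
  have Im[measurable]: "I B \<in> borel_measurable borel" if "B \<in> sets borel" for B
    unfolding I_def using inner_meas[OF v that] .
  have Isp: "I {x..y} t = I {x..m} t + I {m..y} t" for t
    unfolding I_def by (rule nn_split[OF assms(1,2) kern_meas2[OF v]])
  have "En v p {x..y} {x..y} = (\<integral>\<^sup>+t. (I {x..m} t + I {m..y} t) * indicator {x..y} t \<partial>lborel)"
    unfolding En_def I_def[symmetric] Isp ..
  also have "\<dots> = (\<integral>\<^sup>+t. (I {x..m} t + I {m..y} t) * indicator {x..m} t \<partial>lborel)
                + (\<integral>\<^sup>+t. (I {x..m} t + I {m..y} t) * indicator {m..y} t \<partial>lborel)"
    by (rule nn_split[OF assms(1,2)]) measurable
  also have "(\<integral>\<^sup>+t. (I {x..m} t + I {m..y} t) * indicator {x..m} t \<partial>lborel)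
      = En v p {x..m} {x..m} + En v p {x..m} {m..y}"
    unfolding En_def I_def[symmetric] distrib_right by (rule nn_integral_add) measurable
  also have "(\<integral>\<^sup>+t. (I {x..m} t + I {m..y} t) * indicator {m..y} t \<partial>lborel)
      = En v p {m..y} {x..m} + En v p {m..y} {m..y}"
    unfolding En_def I_def[symmetric] distrib_right by (rule nn_integral_add) measurable
  finally show ?thesis
    by (metis (no_types, lifting) add.commute add.left_commute add_increasing2 le_iff_add zero_le)
qed

lemma pt_kern:
  fixes v :: "real \<Rightarrow> real"
  assumes p: "1 < p" and e: "0 < e" and D: "\<bar>t - s\<bar> \<le> D"
  shows "ennreal \<bar>v t - v s\<bar> \<le> ennreal e + ennreal (e powr (1 - p) * D^2) * kern v p t s"
proof -
  have "\<bar>v t - v s\<bar> powr p \<le> D^2 * (\<bar>v t - v s\<bar> powr p / \<bar>t - s\<bar>^2)"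
  proof (cases "t = s")
    case True then show ?thesis by simp
  next
    case False
    then have pos: "\<bar>t - s\<bar>^2 > 0" by simp
    have "\<bar>t - s\<bar>^2 \<le> D^2" using D by (intro power_mono) auto
    then have "\<bar>v t - v s\<bar> powr p * \<bar>t - s\<bar>^2 \<le> \<bar>v t - v s\<bar> powr p * D^2"
      by (intro mult_left_mono) auto
    then show ?thesis using pos by (simp add: field_simps)
  qed
  then have "e powr (1 - p) * \<bar>v t - v s\<bar> powr p \<le> e powr (1 - p) * (D^2 * (\<bar>v t - v s\<bar> powr p / \<bar>t - s\<bar>^2))"
    by (rule mult_left_mono) auto
  then have "e powr (1 - p) * \<bar>v t - v s\<bar> powr p \<le> e powr (1 - p) * D^2 * (\<bar>v t - v s\<bar> powr p / \<bar>t - s\<bar>^2)"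
    by (simp only: mult.assoc)
  moreover have "\<bar>v t - v s\<bar> \<le> e + e powr (1 - p) * \<bar>v t - v s\<bar> powr p"
    using pt_bound[OF _ e p] by simp
  ultimately have "\<bar>v t - v s\<bar> \<le> e + e powr (1 - p) * D^2 * (\<bar>v t - v s\<bar> powr p / \<bar>t - s\<bar>^2)"
    by linarith
  then have "ennreal \<bar>v t - v s\<bar> \<le> ennreal (e + e powr (1 - p) * D^2 * (\<bar>v t - v s\<bar> powr p / \<bar>t - s\<bar>^2))"
    by (rule ennreal_leI)
  also have "\<dots> = ennreal e + ennreal (e powr (1 - p) * D^2) * kern v p t s"
  proof -
    define c where "c = e powr (1 - p) * D^2"
    define k where "k = \<bar>v t - v s\<bar> powr p / \<bar>t - s\<bar>^2"
    have c: "0 \<le> c" "0 \<le> k" by (auto simp: c_def k_def)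
    have "ennreal (e + c * k) = ennreal e + ennreal (c * k)" using e c by (intro ennreal_plus) auto
    also have "ennreal (c * k) = ennreal c * ennreal k" using c by (rule ennreal_mult)
    finally show ?thesis unfolding kern_def c_def k_def by (simp add: mult.assoc)
  qed
  finally show ?thesis .
qed

lemma pair_bound:
  fixes v :: "real \<Rightarrow> real" and A B :: "real set"
  assumes p: "1 < p" and e: "0 < e" and v[measurable]: "v \<in> borel_measurable borel"
    and A[measurable]: "A \<in> sets borel" and B[measurable]: "B \<in> sets borel"
    and D: "\<And>t s. t \<in> A \<Longrightarrow> s \<in> B \<Longrightarrow> \<bar>t - s\<bar> \<le> D"
  shows "dbl v A B \<le> ennreal e * emeasure lborel B * emeasure lborel A + ennreal (e powr (1-p) * D^2) * En v p A B"
proof -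
  define c where "c = ennreal (e powr (1-p) * D^2)"
  define I where "I t = (\<integral>\<^sup>+s. kern v p t s * indicator B s \<partial>lborel)" for t
  have km[measurable]: "(\<lambda>s. kern v p t s) \<in> borel_measurable borel" for t by (rule kern_meas2[OF v])
  have Im[measurable]: "I \<in> borel_measurable borel" unfolding I_def by (rule inner_meas[OF v B])
  have inner: "(\<integral>\<^sup>+s. ennreal \<bar>v t - v s\<bar> * indicator B s \<partial>lborel) \<le> ennreal e * emeasure lborel B + c * I t"
    if "t \<in> A" for t
  proof -
    have "(\<integral>\<^sup>+s. ennreal \<bar>v t - v s\<bar> * indicator B s \<partial>lborel)
        \<le> (\<integral>\<^sup>+s. (ennreal e + c * kern v p t s) * indicator B s \<partial>lborel)"
      by (intro nn_integral_mono) (auto simp: indicator_def c_def intro!: pt_kern[OF p e] D that)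
    also have "\<dots> = (\<integral>\<^sup>+s. ennreal e * indicator B s + c * (kern v p t s * indicator B s) \<partial>lborel)"
      by (simp add: distrib_right mult.assoc)
    also have "\<dots> = (\<integral>\<^sup>+s. ennreal e * indicator B s \<partial>lborel) + (\<integral>\<^sup>+s. c * (kern v p t s * indicator B s) \<partial>lborel)"
      by (rule nn_integral_add) auto
    also have "\<dots> = ennreal e * emeasure lborel B + c * I t"
      unfolding I_def by (subst nn_integral_cmult) (auto simp: nn_integral_cmult_indicator)
    finally show ?thesis .
  qed
  have "dbl v A B \<le> (\<integral>\<^sup>+t. (ennreal e * emeasure lborel B + c * I t) * indicator A t \<partial>lborel)"
    unfolding dbl_def
  proof (rule nn_integral_mono)
    fix t show "(\<integral>\<^sup>+s. ennreal \<bar>v t - v s\<bar> * indicator B s \<partial>lborel) * indicator A t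
        \<le> (ennreal e * emeasure lborel B + c * I t) * indicator A t"
      by (cases "t \<in> A") (simp_all add: inner)
  qed
  also have "\<dots> = (\<integral>\<^sup>+t. (ennreal e * emeasure lborel B) * indicator A t + c * (I t * indicator A t) \<partial>lborel)"
    by (simp add: distrib_right mult.assoc)
  also have "\<dots> = (\<integral>\<^sup>+t. (ennreal e * emeasure lborel B) * indicator A t \<partial>lborel) + (\<integral>\<^sup>+t. c * (I t * indicator A t) \<partial>lborel)"
    by (rule nn_integral_add) auto
  also have "\<dots> = ennreal e * emeasure lborel B * emeasure lborel A + c * En v p A B"
    unfolding En_def I_def[symmetric] by (subst nn_integral_cmult) (auto simp: nn_integral_cmult_indicator)
  finally show ?thesis unfolding c_def .
qed

lemma abs_set_integral_le:
  fixes f :: "real \<Rightarrow> real"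
  assumes "set_integrable lborel A f"
  shows "ennreal \<bar>set_lebesgue_integral lborel A f\<bar> \<le> (\<integral>\<^sup>+x. ennreal \<bar>f x\<bar> * indicator A x \<partial>lborel)"
proof -
  have "ennreal (norm (integral\<^sup>L lborel (\<lambda>x. indicator A x *\<^sub>R f x))) \<le> (\<integral>\<^sup>+x. norm (indicator A x *\<^sub>R f x) \<partial>lborel)"
    using assms unfolding set_integrable_def by (rule integral_norm_bound_ennreal)
  also have "\<dots> = (\<integral>\<^sup>+x. ennreal \<bar>f x\<bar> * indicator A x \<partial>lborel)"
    by (intro nn_integral_cong) (auto simp: indicator_def)
  finally show ?thesis unfolding set_lebesgue_integral_def by simp
qed

lemma set_integral_const_Icc:
  fixes x y c :: real
  assumes "x \<le> y"
  shows "(LBINT s:{x..y}. c) = (y - x) * c"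
  using assms by (simp add: set_integral_const)

lemma set_integrable_const_Icc:
  fixes x y c :: real
  shows "set_integrable lborel {x..y} (\<lambda>_. c)"
  unfolding set_integrable_def by (simp add: integrable_indicator_iff emeasure_lborel_Icc_eq)

lemma mean_dev:
  fixes v :: "real \<Rightarrow> real"
  assumes xy: "x < y" and vi: "set_integrable lborel {x..y} v"
  shows "ennreal ((y - x) * \<bar>v t - mean_on v x y\<bar>) \<le> (\<integral>\<^sup>+s. ennreal \<bar>v t - v s\<bar> * indicator {x..y} s \<partial>lborel)"
proof -
  have si: "set_integrable lborel {x..y} (\<lambda>s. v t - v s)"
    using set_integrable_const_Icc vi by (rule set_integral_diff)
  have "(LBINT s:{x..y}. v t - v s) = (LBINT s:{x..y}. v t) - (LBINT s:{x..y}. v s)"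
    using set_integrable_const_Icc vi by (rule set_integral_diff)
  also have "\<dots> = (y - x) * (v t - mean_on v x y)"
    using xy by (simp add: set_integral_const_Icc mean_on_def field_simps)
  finally have eq: "(LBINT s:{x..y}. v t - v s) = (y - x) * (v t - mean_on v x y)" .
  have "ennreal ((y - x) * \<bar>v t - mean_on v x y\<bar>) = ennreal \<bar>LBINT s:{x..y}. v t - v s\<bar>"
    using xy by (simp add: eq abs_mult)
  also have "\<dots> \<le> (\<integral>\<^sup>+s. ennreal \<bar>v t - v s\<bar> * indicator {x..y} s \<partial>lborel)"
    by (rule abs_set_integral_le[OF si])
  finally show ?thesis .
qed

lemma mean_diff:
  fixes v :: "real \<Rightarrow> real"
  assumes xy1: "x1 < y1" and xy2: "x2 < y2"
    and vi1: "set_integrable lborel {x1..y1} v" and vi2: "set_integrable lborel {x2..y2} v"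
    and v[measurable]: "v \<in> borel_measurable borel"
  shows "ennreal ((y1 - x1) * (y2 - x2) * \<bar>mean_on v x1 y1 - mean_on v x2 y2\<bar>) \<le> dbl v {x1..y1} {x2..y2}"
proof -
  define m2 where "m2 = mean_on v x2 y2"
  have si: "set_integrable lborel {x1..y1} (\<lambda>t. v t - m2)"
    using vi1 set_integrable_const_Icc by (rule set_integral_diff)
  have "(LBINT t:{x1..y1}. v t - m2) = (LBINT t:{x1..y1}. v t) - (LBINT t:{x1..y1}. m2)"
    using vi1 set_integrable_const_Icc by (rule set_integral_diff)
  also have "\<dots> = (y1 - x1) * (mean_on v x1 y1 - m2)"
    using xy1 by (simp add: set_integral_const_Icc mean_on_def field_simps)
  finally have eq: "(LBINT t:{x1..y1}. v t - m2) = (y1 - x1) * (mean_on v x1 y1 - m2)" .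
  have "ennreal ((y1 - x1) * \<bar>mean_on v x1 y1 - m2\<bar>) = ennreal \<bar>LBINT t:{x1..y1}. v t - m2\<bar>"
    using xy1 by (simp add: eq abs_mult)
  also have "\<dots> \<le> (\<integral>\<^sup>+t. ennreal \<bar>v t - m2\<bar> * indicator {x1..y1} t \<partial>lborel)"
    by (rule abs_set_integral_le[OF si])
  finally have s1: "ennreal ((y1 - x1) * \<bar>mean_on v x1 y1 - m2\<bar>) \<le> (\<integral>\<^sup>+t. ennreal \<bar>v t - m2\<bar> * indicator {x1..y1} t \<partial>lborel)" .
  have "ennreal ((y1 - x1) * (y2 - x2) * \<bar>mean_on v x1 y1 - m2\<bar>)
      = ennreal (y2 - x2) * ennreal ((y1 - x1) * \<bar>mean_on v x1 y1 - m2\<bar>)"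
    using xy1 xy2 by (simp add: ennreal_mult[symmetric] mult_ac)
  also have "\<dots> \<le> ennreal (y2 - x2) * (\<integral>\<^sup>+t. ennreal \<bar>v t - m2\<bar> * indicator {x1..y1} t \<partial>lborel)"
    by (rule mult_left_mono[OF s1]) simp
  also have "\<dots> = (\<integral>\<^sup>+t. ennreal ((y2 - x2) * \<bar>v t - m2\<bar>) * indicator {x1..y1} t \<partial>lborel)"
    using xy2 by (subst nn_integral_cmult[symmetric]) (auto simp: ennreal_mult mult.assoc)
  also have "\<dots> \<le> dbl v {x1..y1} {x2..y2}"
    unfolding dbl_def m2_def
    by (intro nn_integral_mono mult_right_mono mean_dev[OF xy2 vi2]) simp
  finally show ?thesis unfolding m2_def .
qed

lemma osc_dbl:
  fixes v :: "real \<Rightarrow> real"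
  assumes xy: "x < y" and vi: "set_integrable lborel {x..y} v" and v[measurable]: "v \<in> borel_measurable borel"
  shows "ennreal ((y - x) * (LBINT t:{x..y}. \<bar>v t - mean_on v x y\<bar>)) \<le> dbl v {x..y} {x..y}"
proof -
  define m where "m = mean_on v x y"
  have si: "set_integrable lborel {x..y} (\<lambda>t. \<bar>v t - m\<bar>)"
    using set_integral_diff(1)[OF vi set_integrable_const_Icc] by (rule set_integrable_abs)
  have "ennreal (LBINT t:{x..y}. \<bar>v t - m\<bar>) = (\<integral>\<^sup>+t. ennreal (indicator {x..y} t * \<bar>v t - m\<bar>) \<partial>lborel)"
    using si unfolding set_integrable_def set_lebesgue_integral_def
    by (subst nn_integral_eq_integral) auto
  also have "\<dots> = (\<integral>\<^sup>+t. ennreal \<bar>v t - m\<bar> * indicator {x..y} t \<partial>lborel)"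
    by (intro nn_integral_cong) (auto simp: indicator_def)
  finally have eq: "ennreal (LBINT t:{x..y}. \<bar>v t - m\<bar>) = (\<integral>\<^sup>+t. ennreal \<bar>v t - m\<bar> * indicator {x..y} t \<partial>lborel)" .
  have nn: "0 \<le> (LBINT t:{x..y}. \<bar>v t - m\<bar>)"
    unfolding set_lebesgue_integral_def by (intro Bochner_Integration.integral_nonneg) simp
  have "ennreal ((y - x) * (LBINT t:{x..y}. \<bar>v t - m\<bar>)) = ennreal (y - x) * ennreal (LBINT t:{x..y}. \<bar>v t - m\<bar>)"
    using xy nn by (simp add: ennreal_mult)
  also have "\<dots> = (\<integral>\<^sup>+t. ennreal ((y - x) * \<bar>v t - m\<bar>) * indicator {x..y} t \<partial>lborel)"
    unfolding eq using xy by (subst nn_integral_cmult[symmetric]) (auto simp: ennreal_mult mult.assoc)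
  also have "\<dots> \<le> dbl v {x..y} {x..y}"
    unfolding dbl_def m_def
    by (intro nn_integral_mono mult_right_mono mean_dev[OF xy vi]) simp
  finally show ?thesis unfolding m_def .
qed

lemma ennreal_lin3:
  fixes a b c d f :: real
  assumes "0 \<le> a" "0 \<le> b" "0 \<le> c" "0 \<le> d" "0 \<le> f"
  shows "ennreal a * ennreal b * ennreal c + ennreal d * ennreal f = ennreal (a * b * c + d * f)"
  using assms by (simp add: ennreal_mult ennreal_plus)

lemma osc_eps:
  fixes v :: "real \<Rightarrow> real"
  assumes p: "1 < p" and xy: "x < y" and vi: "set_integrable lborel {x..y} v"
    and v[measurable]: "v \<in> borel_measurable borel" and fin: "En v p {x..y} {x..y} \<noteq> \<infinity>"
    and e: "0 < e"
  shows "(LBINT t:{x..y}. \<bar>v t - mean_on v x y\<bar>) \<le> (y - x) * (e + e powr (1 - p) * enn2real (En v p {x..y} {x..y}))"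
proof -
  define X where "X = (LBINT t:{x..y}. \<bar>v t - mean_on v x y\<bar>)"
  define E where "E = enn2real (En v p {x..y} {x..y})"
  have EE: "En v p {x..y} {x..y} = ennreal E" using fin unfolding E_def by (simp add: ennreal_enn2real_if)
  have E0: "0 \<le> E" unfolding E_def by simp
  have "ennreal ((y - x) * X) \<le> dbl v {x..y} {x..y}" unfolding X_def by (rule osc_dbl[OF xy vi v])
  also have "\<dots> \<le> ennreal e * emeasure lborel {x..y} * emeasure lborel {x..y} + ennreal (e powr (1-p) * (y - x)^2) * En v p {x..y} {x..y}"
    by (rule pair_bound[OF p e v]) auto
  also have "\<dots> = ennreal e * ennreal (y - x) * ennreal (y - x) + ennreal (e powr (1-p) * (y - x)^2) * ennreal E"
    using xy by (simp add: EE)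
  also have "\<dots> = ennreal (e * (y - x) * (y - x) + e powr (1-p) * (y - x)^2 * E)"
    using xy e E0 by (intro ennreal_lin3) auto
  finally have "(y - x) * X \<le> e * (y - x) * (y - x) + e powr (1-p) * (y - x)^2 * E"
    using xy e E0 by (subst (asm) ennreal_le_iff) (auto intro!: add_nonneg_nonneg)
  then have "(y - x) * X \<le> (y - x) * ((y - x) * (e + e powr (1 - p) * E))"
    by (simp add: algebra_simps power2_eq_square)
  then show ?thesis using xy unfolding X_def E_def by simp
qed

lemma mean_osc_bound:
  fixes v :: "real \<Rightarrow> real"
  assumes p: "1 < p" and xy: "x < y" and vi: "set_integrable lborel {x..y} v"
    and v[measurable]: "v \<in> borel_measurable borel" and fin: "En v p {x..y} {x..y} \<noteq> \<infinity>"
  shows "mean_osc v x y \<le> 2 * enn2real (En v p {x..y} {x..y}) powr (1/p)"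
proof (rule eps_opt[OF p])
  show "0 \<le> enn2real (En v p {x..y} {x..y})" by simp
  fix e :: real assume e: "0 < e"
  from osc_eps[OF p xy vi v fin e] xy
  show "mean_osc v x y \<le> e + e powr (1 - p) * enn2real (En v p {x..y} {x..y})"
    unfolding mean_osc_def by (simp add: divide_le_eq mult.commute)
qed

lemma half_diff_bound:
  fixes v :: "real \<Rightarrow> real"
  assumes p: "1 < p" and xy: "x < y"
    and vi1: "set_integrable lborel {x..(x+y)/2} v" and vi2: "set_integrable lborel {(x+y)/2..y} v"
    and v[measurable]: "v \<in> borel_measurable borel" and fin: "En v p {x..(x+y)/2} {(x+y)/2..y} \<noteq> \<infinity>"
  shows "\<bar>mean_on v x ((x+y)/2) - mean_on v ((x+y)/2) y\<bar> \<le> 2 * (4 * enn2real (En v p {x..(x+y)/2} {(x+y)/2..y})) powr (1/p)"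
proof (rule eps_opt[OF p])
  define m where "m = (x + y) / 2"
  define E where "E = enn2real (En v p {x..m} {m..y})"
  have EE: "En v p {x..m} {m..y} = ennreal E" using fin unfolding E_def m_def by (simp add: ennreal_enn2real_if)
  have E0: "0 \<le> E" unfolding E_def by simp
  show "0 \<le> 4 * enn2real (En v p {x..(x+y)/2} {(x+y)/2..y})" by simp
  fix e :: real assume e: "0 < e"
  define l where "l = (y - x) / 2"
  have l: "0 < l" "m - x = l" "y - m = l" "y - x = 2 * l" using xy by (auto simp: l_def m_def field_simps)
  have xm: "x < m" "m < y" using xy by (auto simp: m_def)
  have "ennreal ((m - x) * (y - m) * \<bar>mean_on v x m - mean_on v m y\<bar>) \<le> dbl v {x..m} {m..y}"
    by (rule mean_diff[OF xm(1) xm(2) vi1[folded m_def] vi2[folded m_def] v])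
  also have "\<dots> \<le> ennreal e * emeasure lborel {m..y} * emeasure lborel {x..m} + ennreal (e powr (1-p) * (y - x)^2) * En v p {x..m} {m..y}"
    by (rule pair_bound[OF p e v]) auto
  also have "\<dots> = ennreal e * ennreal l * ennreal l + ennreal (e powr (1-p) * (2 * l)^2) * ennreal E"
    using xm by (simp add: EE l)
  also have "\<dots> = ennreal (e * l * l + e powr (1-p) * (2 * l)^2 * E)"
    using l e E0 by (intro ennreal_lin3) auto
  finally have "l * l * \<bar>mean_on v x m - mean_on v m y\<bar> \<le> e * l * l + e powr (1-p) * (2 * l)^2 * E"
    using l e E0 by (subst (asm) ennreal_le_iff) (auto intro!: add_nonneg_nonneg)
  then have "(l * l) * \<bar>mean_on v x m - mean_on v m y\<bar> \<le> (l * l) * (e + e powr (1 - p) * (4 * E))"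
    by (simp add: algebra_simps power2_eq_square)
  then have "\<bar>mean_on v x m - mean_on v m y\<bar> \<le> e + e powr (1 - p) * (4 * E)"
    using l by (simp add: mult_le_cancel_left_pos)
  then show "\<bar>mean_on v x ((x+y)/2) - mean_on v ((x+y)/2) y\<bar> \<le> e + e powr (1 - p) * (4 * enn2real (En v p {x..(x+y)/2} {(x+y)/2..y}))"
    unfolding m_def E_def .
qed

lemma bdd_set_integrable:
  fixes v :: "real \<Rightarrow> real"
  assumes [measurable]: "v \<in> borel_measurable borel" and bnd: "\<And>t. \<bar>v t\<bar> \<le> M"
  shows "set_integrable lborel {x..y} v"
  unfolding set_integrable_def
proof (rule integrableI_bounded_set[where A="{x..y}" and B=M])
  show "emeasure lborel {x..y} < \<infinity>" by (simp add: emeasure_lborel_Icc_eq)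
  show "AE t in lborel. t \<in> {x..y} \<longrightarrow> norm (indicator {x..y} t *\<^sub>R v t) \<le> M"
    using bnd by (auto simp: indicator_def)
  show "AE t in lborel. t \<notin> {x..y} \<longrightarrow> indicator {x..y} t *\<^sub>R v t = 0"
    by (auto simp: indicator_def)
qed auto

lemma split_int:
  fixes f :: "real \<Rightarrow> real"
  assumes "x \<le> m" "m \<le> y" and fi: "set_integrable lborel {x..y} f"
  shows "(LBINT t:{x..y}. f t) = (LBINT t:{x..m}. f t) + (LBINT t:{m..y}. f t)"
proof -
  have "{x..y} = {x..m} \<union> {m..y}" using assms by auto
  moreover have "(LBINT t:{x..m} \<union> {m..y}. f t) = (LBINT t:{x..m}. f t) + (LBINT t:{m..y}. f t)"
  proof (rule set_integral_Un_AE)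
    show "AE t in lborel. \<not> (t \<in> {x..m} \<and> t \<in> {m..y})"
      using AE_lborel_singleton[of m] by eventually_elim auto
    show "set_integrable lborel {x..m} f" by (rule set_integrable_subset[OF fi]) (use assms in auto)
    show "set_integrable lborel {m..y} f" by (rule set_integrable_subset[OF fi]) (use assms in auto)
  qed auto
  ultimately show ?thesis by simp
qed

lemma mean_mid:
  fixes v :: "real \<Rightarrow> real"
  assumes xy: "x < y" and vi: "set_integrable lborel {x..y} v"
  shows "mean_on v x y = (mean_on v x ((x+y)/2) + mean_on v ((x+y)/2) y) / 2"
proof -
  have "(LBINT t:{x..y}. v t) = (LBINT t:{x..(x+y)/2}. v t) + (LBINT t:{(x+y)/2..y}. v t)"
    using xy vi by (intro split_int) auto
  moreover have "(x + y) / 2 - x = (y - x) / 2" "y - (x + y) / 2 = (y - x) / 2" by (simp_all add: field_simps)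
  ultimately show ?thesis using xy unfolding mean_on_def by (simp add: add_divide_distrib)
qed

lemma exp_lip:
  fixes a b K :: real
  assumes "a \<le> K" "b \<le> K"
  shows "\<bar>exp a - exp b\<bar> \<le> exp K * \<bar>a - b\<bar>"
proof -
  have main: "exp b - exp a \<le> exp K * (b - a)" if "a \<le> b" "b \<le> K" for a b :: real
  proof -
    have "exp b - exp a = exp b * (1 - exp (a - b))" by (simp add: algebra_simps exp_diff)
    also have "1 - exp (a - b) \<le> b - a" using exp_ge_add_one_self[of "a - b"] by linarith
    then have "exp b * (1 - exp (a - b)) \<le> exp b * (b - a)" by (intro mult_left_mono) auto
    also have "\<dots> \<le> exp K * (b - a)" using that by (intro mult_right_mono) auto
    finally show ?thesis .
  qed
  show ?thesis
  proof (cases "a \<le> b")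
    case True
    then show ?thesis using main[of a b] assms by (simp add: abs_if)
  next
    case False
    then show ?thesis using main[of b a] assms by (simp add: abs_if)
  qed
qed

lemma mean_bdd:
  fixes v :: "real \<Rightarrow> real"
  assumes xy: "x < y" and vi: "set_integrable lborel {x..y} v" and bnd: "\<And>t. \<bar>v t\<bar> \<le> M"
  shows "\<bar>mean_on v x y\<bar> \<le> M"
proof -
  have "(LBINT t:{x..y}. v t) \<le> (LBINT t:{x..y}. M)"
  proof (rule set_integral_mono[OF vi set_integrable_const_Icc])
    fix t show "v t \<le> M" using bnd[of t] by (simp add: abs_le_iff)
  qed
  moreover have "(LBINT t:{x..y}. - M) \<le> (LBINT t:{x..y}. v t)"
  proof (rule set_integral_mono[OF set_integrable_const_Icc vi])
    fix t show "- M \<le> v t" using bnd[of t] by (simp add: abs_le_iff)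
  qed
  ultimately have "\<bar>LBINT t:{x..y}. v t\<bar> \<le> (y - x) * M"
    using xy by (simp add: set_integral_const_Icc abs_le_iff)
  then show ?thesis using xy unfolding mean_on_def by (simp add: divide_le_eq abs_div mult.commute)
qed

lemma abs_set_int_le_real:
  fixes f :: "real \<Rightarrow> real"
  assumes "set_integrable lborel A f"
  shows "\<bar>LBINT t:A. f t\<bar> \<le> (LBINT t:A. \<bar>f t\<bar>)"
proof -
  have "\<bar>LBINT t. indicator A t *\<^sub>R f t\<bar> \<le> (LBINT t. \<bar>indicator A t *\<^sub>R f t\<bar>)"
    by (rule integral_abs_bound)
  also have "(\<lambda>t. \<bar>indicator A t *\<^sub>R f t\<bar>) = (\<lambda>t. indicator A t *\<^sub>R \<bar>f t\<bar>)"
    by (auto simp: indicator_def)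
  finally show ?thesis unfolding set_lebesgue_integral_def .
qed

fun G :: "(real \<Rightarrow> real) \<Rightarrow> nat \<Rightarrow> real \<Rightarrow> real \<Rightarrow> real" where
  "G v 0 x y = 1"
| "G v (Suc k) x y = (exp (mean_on v x ((x+y)/2) - mean_on v x y) * G v k x ((x+y)/2)
     + exp (mean_on v ((x+y)/2) y - mean_on v x y) * G v k ((x+y)/2) y) / 2"

fun Er :: "(real \<Rightarrow> real) \<Rightarrow> nat \<Rightarrow> real \<Rightarrow> real \<Rightarrow> real" where
  "Er v 0 x y = (LBINT t:{x..y}. \<bar>v t - mean_on v x y\<bar>)"
| "Er v (Suc k) x y = Er v k x ((x+y)/2) + Er v k ((x+y)/2) y"

lemma approx_G:
  fixes v :: "real \<Rightarrow> real"
  assumes v[measurable]: "v \<in> borel_measurable borel" and bnd: "\<And>t. \<bar>v t\<bar> \<le> M"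
  shows "x < y \<Longrightarrow> \<bar>(LBINT t:{x..y}. exp (v t - c)) - (y - x) * exp (mean_on v x y - c) * G v k x y\<bar>
           \<le> exp (M - c) * Er v k x y"
proof (induction k arbitrary: x y)
  case 0
  have vi: "set_integrable lborel {x..y} v" by (rule bdd_set_integrable[OF v bnd])
  define m where "m = mean_on v x y"
  have mb: "\<bar>m\<bar> \<le> M" unfolding m_def by (rule mean_bdd[OF 0 vi bnd])
  have ei: "set_integrable lborel {x..y} (\<lambda>t. exp (v t - c))"
  proof (rule bdd_set_integrable[where M="exp (M - c)"])
    show "(\<lambda>t. exp (v t - c)) \<in> borel_measurable borel" by measurable
    fix t show "\<bar>exp (v t - c)\<bar> \<le> exp (M - c)" using bnd[of t] by (simp add: abs_le_iff)
  qed
  have di: "set_integrable lborel {x..y} (\<lambda>t. exp (v t - c) - exp (m - c))"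
    using ei set_integrable_const_Icc by (rule set_integral_diff)
  have ai: "set_integrable lborel {x..y} (\<lambda>t. exp (M - c) * \<bar>v t - m\<bar>)"
    using set_integral_diff(1)[OF vi set_integrable_const_Icc, THEN set_integrable_abs]
    by (rule set_integrable_mult_right)
  have "(LBINT t:{x..y}. exp (v t - c)) - (y - x) * exp (m - c) = (LBINT t:{x..y}. exp (v t - c) - exp (m - c))"
    using 0 by (simp add: set_integral_diff(2)[OF ei set_integrable_const_Icc] set_integral_const_Icc)
  moreover have "\<bar>LBINT t:{x..y}. exp (v t - c) - exp (m - c)\<bar> \<le> (LBINT t:{x..y}. \<bar>exp (v t - c) - exp (m - c)\<bar>)"
    by (rule abs_set_int_le_real[OF di])
  moreover have "(LBINT t:{x..y}. \<bar>exp (v t - c) - exp (m - c)\<bar>) \<le> (LBINT t:{x..y}. exp (M - c) * \<bar>v t - m\<bar>)"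
  proof (rule set_integral_mono[OF set_integrable_abs[OF di] ai])
    fix t
    have "\<bar>exp (v t - c) - exp (m - c)\<bar> \<le> exp (M - c) * \<bar>(v t - c) - (m - c)\<bar>"
      using bnd[of t] mb by (intro exp_lip) (auto simp: abs_le_iff)
    then show "\<bar>exp (v t - c) - exp (m - c)\<bar> \<le> exp (M - c) * \<bar>v t - m\<bar>" by simp
  qed
  ultimately show ?case unfolding m_def by simp
next
  case (Suc k)
  define m where "m = (x + y) / 2"
  have xm: "x < m" "m < y" using Suc.prems by (auto simp: m_def)
  have vi: "set_integrable lborel {x..y} v" by (rule bdd_set_integrable[OF v bnd])
  have ei: "set_integrable lborel {x..y} (\<lambda>t. exp (v t - c))"
  proof (rule bdd_set_integrable[where M="exp (M - c)"])
    show "(\<lambda>t. exp (v t - c)) \<in> borel_measurable borel" by measurable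
    fix t show "\<bar>exp (v t - c)\<bar> \<le> exp (M - c)" using bnd[of t] by (simp add: abs_le_iff)
  qed
  have sp: "(LBINT t:{x..y}. exp (v t - c)) = (LBINT t:{x..m}. exp (v t - c)) + (LBINT t:{m..y}. exp (v t - c))"
    using xm ei by (intro split_int) auto
  have l: "m - x = (y - x) / 2" "y - m = (y - x) / 2" by (simp_all add: m_def field_simps)
  have gs: "(y - x) * exp (mean_on v x y - c) * G v (Suc k) x y
      = (m - x) * exp (mean_on v x m - c) * G v k x m + (y - m) * exp (mean_on v m y - c) * G v k m y"
    unfolding G.simps m_def[symmetric] l
    by (simp add: field_simps exp_diff)
  have "\<bar>(LBINT t:{x..y}. exp (v t - c)) - (y - x) * exp (mean_on v x y - c) * G v (Suc k) x y\<bar>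
      \<le> \<bar>(LBINT t:{x..m}. exp (v t - c)) - (m - x) * exp (mean_on v x m - c) * G v k x m\<bar>
       + \<bar>(LBINT t:{m..y}. exp (v t - c)) - (y - m) * exp (mean_on v m y - c) * G v k m y\<bar>"
    unfolding sp gs by linarith
  also have "\<dots> \<le> exp (M - c) * Er v k x m + exp (M - c) * Er v k m y"
    using Suc.IH[OF xm(1)] Suc.IH[OF xm(2)] by (rule add_mono)
  also have "\<dots> = exp (M - c) * Er v (Suc k) x y"
    by (simp add: m_def distrib_left)
  finally show ?case .
qed

lemma Kc_pos: "0 < p \<Longrightarrow> 0 < Kc p"
proof -
  assume p: "0 < p"
  have "2 powr (-1/p) < 2 powr 0" using p by (intro powr_less_mono) auto
  then show ?thesis unfolding Kc_def by simp
qed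

lemma En_fin:
  assumes "En v p A B \<le> ennreal \<eta>"
  shows "En v p A B \<noteq> \<infinity>"
proof
  assume "En v p A B = \<infinity>"
  then have "top \<le> ennreal \<eta>" using assms by simp
  then show False by (simp add: top_unique)
qed

lemma En_le_real:
  assumes "En v p A B \<le> ennreal \<eta>" "0 \<le> \<eta>"
  shows "enn2real (En v p A B) \<le> \<eta>"
proof -
  have "enn2real (En v p A B) \<le> enn2real (ennreal \<eta>)"
    using assms(1) by (rule enn2real_mono) simp
  then show ?thesis using assms(2) by simp
qed

lemma En_super_real:
  assumes "x \<le> m" "m \<le> y" and v[measurable]: "v \<in> borel_measurable borel"
    and enb: "\<And>a b c d. En v p {a..b} {c..d} \<le> ennreal \<eta>"
  shows "enn2real (En v p {x..m} {x..m}) + enn2real (En v p {m..y} {m..y}) + enn2real (En v p {x..m} {m..y})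
         \<le> enn2real (En v p {x..y} {x..y})"
proof -
  have fin: "En v p {a..b} {c..d} \<noteq> \<infinity>" for a b c d
    using enb[of a b c d] by (rule En_fin)
  have "En v p {x..m} {x..m} + En v p {m..y} {m..y} + En v p {x..m} {m..y} \<le> En v p {x..y} {x..y}"
    by (rule En_super[OF assms(1,2) v])
  then have "ennreal (enn2real (En v p {x..m} {x..m}) + enn2real (En v p {m..y} {m..y}) + enn2real (En v p {x..m} {m..y}))
      \<le> ennreal (enn2real (En v p {x..y} {x..y}))"
    using fin by (simp add: ennreal_plus ennreal_enn2real_if)
  then show ?thesis by (subst (asm) ennreal_le_iff) auto
qed

lemma Er_bound:
  fixes v :: "real \<Rightarrow> real"
  assumes p: "1 < p" and v[measurable]: "v \<in> borel_measurable borel" and bnd: "\<And>t. \<bar>v t\<bar> \<le> M"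
    and enb: "\<And>a b c d. En v p {a..b} {c..d} \<le> ennreal \<eta>" and e: "0 < e"
  shows "x < y \<Longrightarrow> Er v k x y \<le> (y - x) * e + (y - x) * (1/2)^k * (e powr (1 - p) * enn2real (En v p {x..y} {x..y}))"
proof (induction k arbitrary: x y)
  case 0
  have fin: "En v p {x..y} {x..y} \<noteq> \<infinity>"
    using enb[of x y x y] by (rule En_fin)
  have "Er v 0 x y \<le> (y - x) * (e + e powr (1 - p) * enn2real (En v p {x..y} {x..y}))"
    unfolding Er.simps by (rule osc_eps[OF p 0 bdd_set_integrable[OF v bnd] v fin e])
  then show ?case by (simp add: distrib_left)
next
  case (Suc k)
  define m where "m = (x + y) / 2"
  have xm: "x < m" "m < y" using Suc.prems by (auto simp: m_def)
  have l: "m - x = (y - x) / 2" "y - m = (y - x) / 2" by (simp_all add: m_def field_simps)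
  define E where "E = enn2real (En v p {x..y} {x..y})"
  define E1 where "E1 = enn2real (En v p {x..m} {x..m})"
  define E2 where "E2 = enn2real (En v p {m..y} {m..y})"
  have "E1 + E2 + enn2real (En v p {x..m} {m..y}) \<le> E"
    unfolding E_def E1_def E2_def by (rule En_super_real[OF _ _ v enb]) (use xm in auto)
  then have sup: "E1 + E2 \<le> E" using enn2real_nonneg[of "En v p {x..m} {m..y}"] by linarith
  have "Er v (Suc k) x y = Er v k x m + Er v k m y" by (simp add: m_def)
  also have "\<dots> \<le> ((m - x) * e + (m - x) * (1/2)^k * (e powr (1 - p) * E1))
                 + ((y - m) * e + (y - m) * (1/2)^k * (e powr (1 - p) * E2))"
    unfolding E1_def E2_def using Suc.IH[OF xm(1)] Suc.IH[OF xm(2)] by (rule add_mono)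
  also have "\<dots> = (y - x) * e + (y - x) * (1/2)^(Suc k) * (e powr (1 - p) * (E1 + E2))"
    unfolding l by (simp add: field_simps)
  also have "\<dots> \<le> (y - x) * e + (y - x) * (1/2)^(Suc k) * (e powr (1 - p) * E)"
    using sup xm by (intro add_left_mono mult_left_mono) auto
  finally show ?case unfolding E_def .
qed

lemma G_bound:
  fixes v :: "real \<Rightarrow> real"
  assumes p: "1 < p" and v[measurable]: "v \<in> borel_measurable borel" and bnd: "\<And>t. \<bar>v t\<bar> \<le> M"
    and enb: "\<And>a b c d. En v p {a..b} {c..d} \<le> ennreal \<eta>" and eta: "0 \<le> \<eta>"
    and sm1: "2 * (4 * \<eta>) powr (1/p) \<le> 1" and sm2: "2 * (4 * \<eta>) powr (1/p) \<le> (2 powr (1/p) - 1) / 2"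
  shows "x < y \<Longrightarrow> G v k x y \<le> 1 + Kc p * enn2real (En v p {x..y} {x..y}) powr (1/p)"
proof (induction k arbitrary: x y)
  case 0
  have "0 \<le> Kc p * enn2real (En v p {x..y} {x..y}) powr (1/p)"
    using Kc_pos[of p] p by simp
  then show ?case by simp
next
  case (Suc k)
  define m where "m = (x + y) / 2"
  have xm: "x < m" "m < y" using Suc.prems by (auto simp: m_def)
  have vi: "set_integrable lborel {a..b} v" for a b by (rule bdd_set_integrable[OF v bnd])
  define d where "d = mean_on v x m - mean_on v m y"
  have mm: "mean_on v x y = (mean_on v x m + mean_on v m y) / 2"
    unfolding m_def by (rule mean_mid[OF Suc.prems vi])
  have d1: "mean_on v x m - mean_on v x y = d / 2" "mean_on v m y - mean_on v x y = - d / 2"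
    unfolding mm d_def by (simp_all add: field_simps)
  define E where "E = enn2real (En v p {x..y} {x..y})"
  define E1 where "E1 = enn2real (En v p {x..m} {x..m})"
  define E2 where "E2 = enn2real (En v p {m..y} {m..y})"
  define E12 where "E12 = enn2real (En v p {x..m} {m..y})"
  have sup: "E1 + E2 + E12 \<le> E"
    unfolding E_def E1_def E2_def E12_def by (rule En_super_real[OF _ _ v enb]) (use xm in auto)
  have nn: "0 \<le> E1" "0 \<le> E2" "0 \<le> E12" by (auto simp: E1_def E2_def E12_def)
  have dE: "\<bar>d\<bar> \<le> 2 * (4 * E12) powr (1/p)"
    unfolding d_def E12_def m_def
    by (rule half_diff_bound[OF p Suc.prems vi vi v En_fin[OF enb]])
  have "E12 \<le> \<eta>" unfolding E12_def by (rule En_le_real[OF enb eta])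
  then have "(4 * E12) powr (1/p) \<le> (4 * \<eta>) powr (1/p)" using nn p by (intro powr_mono2) auto
  then have dE2: "\<bar>d\<bar> \<le> 2 * (4 * \<eta>) powr (1/p)" using dE by linarith
  have "G v (Suc k) x y = (exp (d/2) * G v k x m + exp (- d/2) * G v k m y) / 2"
    unfolding G.simps m_def[symmetric] d1 by simp
  also have "\<dots> \<le> (exp (d/2) * (1 + Kc p * E1 powr (1/p)) + exp (- d/2) * (1 + Kc p * E2 powr (1/p))) / 2"
    unfolding E1_def E2_def
    by (intro divide_right_mono add_mono mult_left_mono Suc.IH xm) auto
  also have "\<dots> \<le> 1 + Kc p * E powr (1/p)"
    by (rule tree_ineq[OF p nn sup dE]) (use dE2 sm1 sm2 in auto)
  finally show ?case unfolding E_def .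
qed

lemma bnd_exp:
  fixes v :: "real \<Rightarrow> real"
  assumes p: "1 < p" and v[measurable]: "v \<in> borel_measurable borel" and bnd: "\<And>t. \<bar>v t\<bar> \<le> M"
    and enb: "\<And>a b c d. En v p {a..b} {c..d} \<le> ennreal \<eta>" and eta: "0 \<le> \<eta>"
    and sm1: "2 * (4 * \<eta>) powr (1/p) \<le> 1" and sm2: "2 * (4 * \<eta>) powr (1/p) \<le> (2 powr (1/p) - 1) / 2"
    and xy: "x < y"
  shows "(LBINT t:{x..y}. exp (v t - mean_on v x y)) \<le> (y - x) * (1 + Kc p * \<eta> powr (1/p))"
proof -
  define c where "c = mean_on v x y"
  define E where "E = enn2real (En v p {x..y} {x..y})"
  have E0: "0 \<le> E" "E \<le> \<eta>" unfolding E_def using En_le_real[OF enb eta] by auto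
  define I where "I = (LBINT t:{x..y}. exp (v t - c))"
  define C0 where "C0 = (y - x) * (1 + Kc p * \<eta> powr (1/p))"
  have Gb: "G v k x y \<le> 1 + Kc p * \<eta> powr (1/p)" for k
  proof -
    have "G v k x y \<le> 1 + Kc p * E powr (1/p)" unfolding E_def by (rule G_bound[OF p v bnd enb eta sm1 sm2 xy])
    also have "E powr (1/p) \<le> \<eta> powr (1/p)" using E0 p by (intro powr_mono2) auto
    then have "1 + Kc p * E powr (1/p) \<le> 1 + Kc p * \<eta> powr (1/p)" using Kc_pos[of p] p by simp
    finally show ?thesis .
  qed
  have key: "I \<le> C0 + exp (M - c) * ((y - x) * (2 * e))" if e: "0 < e" for e
  proof -
    define A where "A = e powr (1 - p) * E"
    have A0: "0 \<le> A" unfolding A_def using E0 by simp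
    have "e / (A + 1) > 0" using e A0 by simp
    from real_arch_pow_inv[OF this, of "1/2"] obtain k :: nat where k: "(1/2)^k < e / (A + 1)" by auto
    have "(1/2)^k * A \<le> (1/2)^k * (A + 1)" by simp
    also have "\<dots> \<le> e" using k A0 by (simp add: field_simps)
    finally have kA: "(1/2)^k * A \<le> e" .
    have "\<bar>I - (y - x) * exp (mean_on v x y - c) * G v k x y\<bar> \<le> exp (M - c) * Er v k x y"
      unfolding I_def by (rule approx_G[OF v bnd xy])
    then have "I \<le> (y - x) * G v k x y + exp (M - c) * Er v k x y"
      unfolding c_def by simp
    also have "(y - x) * G v k x y \<le> C0" unfolding C0_def using Gb[of k] xy by (intro mult_left_mono) auto
    also have "Er v k x y \<le> (y - x) * e + (y - x) * (1/2)^k * A"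
      unfolding A_def E_def by (rule Er_bound[OF p v bnd enb e xy])
    also have "(y - x) * e + (y - x) * (1/2)^k * A \<le> (y - x) * (2 * e)"
    proof -
      have "(y - x) * e + (y - x) * (1/2)^k * A = (y - x) * (e + (1/2)^k * A)" by (simp add: algebra_simps)
      also have "\<dots> \<le> (y - x) * (2 * e)" using kA xy by (intro mult_left_mono) auto
      finally show ?thesis .
    qed
    finally show ?thesis by (simp add: mult_left_mono)
  qed
  have "I \<le> C0"
  proof (rule field_le_epsilon)
    fix e' :: real assume e': "0 < e'"
    define e where "e = e' / (exp (M - c) * (y - x) * 2)"
    have e: "0 < e" unfolding e_def using e' xy by simp
    have "exp (M - c) * ((y - x) * (2 * e)) = e'" unfolding e_def using xy by (simp add: field_simps)
    then show "I \<le> C0 + e'" using key[OF e] by simp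
  qed
  then show ?thesis unfolding I_def C0_def c_def .
qed

definition trunc :: "real \<Rightarrow> real \<Rightarrow> real" where
  "trunc M z = max (- M) (min M z)"

lemma trunc_lip: "\<bar>trunc M a - trunc M b\<bar> \<le> \<bar>a - b\<bar>"
  unfolding trunc_def by (auto simp: max_def min_def abs_if)

lemma trunc_bnd: "0 \<le> M \<Longrightarrow> \<bar>trunc M z\<bar> \<le> M"
  unfolding trunc_def by (auto simp: max_def min_def abs_if)

lemma trunc_eq: "\<bar>z\<bar> \<le> M \<Longrightarrow> trunc M z = z"
proof -
  assume "\<bar>z\<bar> \<le> M"
  then have "- M \<le> z" "z \<le> M" by (simp_all add: abs_le_iff)
  then show ?thesis unfolding trunc_def by simp
qed

lemma trunc_meas[measurable]: "trunc M \<in> borel_measurable borel"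
  unfolding trunc_def by measurable

lemma kern_mono:
  assumes "1 < p" "\<bar>v t - v s\<bar> \<le> \<bar>h t - h s\<bar>"
  shows "kern v p t s \<le> kern h p t s"
  unfolding kern_def using assms
  by (intro ennreal_leI divide_right_mono powr_mono2) auto

lemma En_mono:
  assumes "1 < p" "\<And>t s. \<bar>v t - v s\<bar> \<le> \<bar>h t - h s\<bar>"
  shows "En v p A B \<le> En h p A B"
  unfolding En_def
  by (intro nn_integral_mono mult_right_mono) (auto intro: kern_mono[OF assms(1)] assms(2))

lemma En_neg: "En (\<lambda>t. - h t) p A B = En h p A B"
  unfolding En_def kern_def by (simp add: abs_minus_commute)

lemma fatou_exp:
  fixes h :: "real \<Rightarrow> real"
  assumes p: "1 < p" and h[measurable]: "h \<in> borel_measurable borel"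
    and hi: "\<And>a b. set_integrable lborel {a..b} h"
    and enb: "\<And>a b c d. En h p {a..b} {c..d} \<le> ennreal \<eta>" and eta: "0 \<le> \<eta>"
    and sm1: "2 * (4 * \<eta>) powr (1/p) \<le> 1" and sm2: "2 * (4 * \<eta>) powr (1/p) \<le> (2 powr (1/p) - 1) / 2"
    and xy: "x < y"
  shows "(\<integral>\<^sup>+t. ennreal (exp (h t - mean_on h x y)) * indicator {x..y} t \<partial>lborel)
         \<le> ennreal ((y - x) * (1 + Kc p * \<eta> powr (1/p)))"
proof -
  define C where "C = (y - x) * (1 + Kc p * \<eta> powr (1/p))"
  define v where "v n t = trunc (real n) (h t)" for n :: nat and t
  have vm[measurable]: "v n \<in> borel_measurable borel" for n unfolding v_def by measurable
  have vb: "\<bar>v n t\<bar> \<le> real n" for n t unfolding v_def by (rule trunc_bnd) simp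
  have venb: "En (v n) p {a..b} {c..d} \<le> ennreal \<eta>" for n a b c d
    using En_mono[OF p, of "v n" h] trunc_lip enb[of a b c d] unfolding v_def by (meson order.trans)
  define f where "f n t = ennreal (exp (v n t - mean_on (v n) x y)) * indicator {x..y} t" for n t
  have fm[measurable]: "f n \<in> borel_measurable borel" for n unfolding f_def by measurable
  have fb: "integral\<^sup>N lborel (f n) \<le> ennreal C" for n
  proof -
    have ei: "set_integrable lborel {x..y} (\<lambda>t. exp (v n t - mean_on (v n) x y))"
    proof (rule bdd_set_integrable[where M="exp (real n - mean_on (v n) x y)"])
      show "(\<lambda>t. exp (v n t - mean_on (v n) x y)) \<in> borel_measurable borel" by measurable
      fix t show "\<bar>exp (v n t - mean_on (v n) x y)\<bar> \<le> exp (real n - mean_on (v n) x y)"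
        using vb[of n t] by (simp add: abs_le_iff)
    qed
    have "integral\<^sup>N lborel (f n) = (\<integral>\<^sup>+t. ennreal (indicator {x..y} t * exp (v n t - mean_on (v n) x y)) \<partial>lborel)"
      unfolding f_def by (intro nn_integral_cong) (auto simp: indicator_def)
    also have "\<dots> = ennreal (LBINT t:{x..y}. exp (v n t - mean_on (v n) x y))"
      using ei unfolding set_integrable_def set_lebesgue_integral_def
      by (subst nn_integral_eq_integral) auto
    also have "\<dots> \<le> ennreal C"
      unfolding C_def
      by (intro ennreal_leI bnd_exp[OF p vm vb venb eta sm1 sm2 xy])
    finally show ?thesis .
  qed
  have vlim: "(\<lambda>n. v n t) \<longlonglongrightarrow> h t" for t
  proof (rule tendsto_eventually)
    show "\<forall>\<^sub>F n in sequentially. v n t = h t"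
      unfolding eventually_sequentially v_def
    proof (intro exI allI impI)
      fix n assume n: "nat \<lceil>\<bar>h t\<bar>\<rceil> \<le> n"
      have "\<bar>h t\<bar> \<le> real (nat \<lceil>\<bar>h t\<bar>\<rceil>)" by (rule real_nat_ceiling_ge)
      also have "\<dots> \<le> real n" using n by (simp only: of_nat_le_iff)
      finally show "trunc (real n) (h t) = h t" by (rule trunc_eq)
    qed
  qed
  have mlim: "(\<lambda>n. mean_on (v n) x y) \<longlonglongrightarrow> mean_on h x y"
  proof -
    have "(\<lambda>n. LBINT t. indicator {x..y} t *\<^sub>R v n t) \<longlonglongrightarrow> (LBINT t. indicator {x..y} t *\<^sub>R h t)"
    proof (rule integral_dominated_convergence[where w="\<lambda>t. indicator {x..y} t *\<^sub>R \<bar>h t\<bar>"])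
      show "integrable lborel (\<lambda>t. indicator {x..y} t *\<^sub>R \<bar>h t\<bar>)"
        using set_integrable_abs[OF hi[of x y]] unfolding set_integrable_def .
      show "AE t in lborel. (\<lambda>n. indicator {x..y} t *\<^sub>R v n t) \<longlonglongrightarrow> indicator {x..y} t *\<^sub>R h t"
        by (intro AE_I2 tendsto_intros vlim)
      fix n show "AE t in lborel. norm (indicator {x..y} t *\<^sub>R v n t) \<le> indicator {x..y} t *\<^sub>R \<bar>h t\<bar>"
        using trunc_lip[of "real n" "h _" 0] by (intro AE_I2) (auto simp: indicator_def v_def trunc_def)
    qed auto
    then show ?thesis unfolding mean_on_def set_lebesgue_integral_def using xy by (intro tendsto_intros) auto
  qed
  have flim: "(\<lambda>n. f n t) \<longlonglongrightarrow> ennreal (exp (h t - mean_on h x y)) * indicator {x..y} t" for t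
    unfolding f_def by (intro tendsto_intros tendsto_ennrealI vlim mlim) (auto simp: indicator_def)
  have "(\<integral>\<^sup>+t. ennreal (exp (h t - mean_on h x y)) * indicator {x..y} t \<partial>lborel) = (\<integral>\<^sup>+t. liminf (\<lambda>n. f n t) \<partial>lborel)"
    by (intro nn_integral_cong lim_imp_Liminf[symmetric] flim) simp
  also have "\<dots> \<le> liminf (\<lambda>n. integral\<^sup>N lborel (f n))"
    by (rule nn_integral_liminf) simp
  also have "\<dots> \<le> limsup (\<lambda>n. integral\<^sup>N lborel (f n))"
    by (rule Liminf_le_Limsup) simp
  also have "\<dots> \<le> ennreal C"
    by (rule Limsup_bounded) (simp add: fb)
  finally show ?thesis unfolding C_def .
qed

lemma AE_lborel_ex:
  fixes P :: "real \<Rightarrow> bool"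
  assumes "AE t in lborel. P t"
  shows "\<exists>t. P t"
proof (rule ccontr)
  assume np: "\<not> (\<exists>t. P t)"
  have "AE t::real in lborel. False" using assms by eventually_elim (use np in auto)
  then have "ae_filter (lborel::real measure) = bot" using eventually_False[of "ae_filter (lborel::real measure)"] by blast
  then have "emeasure (lborel::real measure) (space lborel) = 0" by (simp add: ae_filter_eq_bot_iff)
  then show False by simp
qed

lemma loc_int_energy:
  fixes u :: "real \<Rightarrow> real"
  assumes p: "1 < p" and u[measurable]: "u \<in> borel_measurable borel"
    and fin: "(\<integral>\<^sup>+t. \<integral>\<^sup>+s. kern u p t s \<partial>lborel \<partial>lborel) < \<infinity>"
  shows "set_integrable lborel {a..b} u"
proof -
  have "(\<lambda>(t, s). kern u p t s) \<in> borel_measurable (lborel \<Otimes>\<^sub>M lborel)"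
    unfolding kern_def by measurable
  from lborel.borel_measurable_nn_integral[OF this]
  have im: "(\<lambda>t. \<integral>\<^sup>+s. kern u p t s \<partial>lborel) \<in> borel_measurable lborel" by simp
  have "AE t in lborel. (\<integral>\<^sup>+s. kern u p t s \<partial>lborel) \<noteq> \<infinity>"
    using im fin by (intro nn_integral_PInf_AE) auto
  then obtain t0 where t0: "(\<integral>\<^sup>+s. kern u p t0 s \<partial>lborel) \<noteq> \<infinity>" using AE_lborel_ex by blast
  define D where "D = \<bar>a - t0\<bar> + \<bar>b - t0\<bar>"
  have km[measurable]: "(\<lambda>s. kern u p t0 s) \<in> borel_measurable borel" by (rule kern_meas2[OF u])
  have pt: "ennreal (norm (indicator {a..b} s *\<^sub>R u s))
      \<le> (ennreal (\<bar>u t0\<bar> + 1) + ennreal (D^2) * kern u p t0 s) * indicator {a..b} s" for s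
  proof (cases "s \<in> {a..b}")
    case True
    then have "\<bar>t0 - s\<bar> \<le> D" unfolding D_def by auto
    from pt_kern[OF p zero_less_one this, of u]
    have "ennreal \<bar>u t0 - u s\<bar> \<le> ennreal 1 + ennreal (D^2) * kern u p t0 s" by simp
    moreover have "ennreal \<bar>u s\<bar> \<le> ennreal \<bar>u t0\<bar> + ennreal \<bar>u t0 - u s\<bar>"
    proof -
      have "\<bar>u s\<bar> \<le> \<bar>u t0\<bar> + \<bar>u s - u t0\<bar>" using abs_triangle_ineq[of "u t0" "u s - u t0"] by simp
      then have "ennreal \<bar>u s\<bar> \<le> ennreal (\<bar>u t0\<bar> + \<bar>u t0 - u s\<bar>)" by (intro ennreal_leI) (simp add: abs_minus_commute)
      also have "\<dots> = ennreal \<bar>u t0\<bar> + ennreal \<bar>u t0 - u s\<bar>" by (rule ennreal_plus) auto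
      finally show ?thesis .
    qed
    ultimately have "ennreal \<bar>u s\<bar> \<le> ennreal \<bar>u t0\<bar> + ennreal 1 + ennreal (D^2) * kern u p t0 s"
      by (metis (no_types, lifting) add.assoc add_left_mono order.trans)
    then show ?thesis using True by (simp add: ennreal_plus add.assoc)
  qed simp
  have "(\<integral>\<^sup>+s. ennreal (norm (indicator {a..b} s *\<^sub>R u s)) \<partial>lborel)
      \<le> (\<integral>\<^sup>+s. (ennreal (\<bar>u t0\<bar> + 1) + ennreal (D^2) * kern u p t0 s) * indicator {a..b} s \<partial>lborel)"
    by (intro nn_integral_mono pt)
  also have "\<dots> = (\<integral>\<^sup>+s. ennreal (\<bar>u t0\<bar> + 1) * indicator {a..b} s + ennreal (D^2) * (kern u p t0 s * indicator {a..b} s) \<partial>lborel)"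
    by (simp add: distrib_right mult.assoc)
  also have "\<dots> = (\<integral>\<^sup>+s. ennreal (\<bar>u t0\<bar> + 1) * indicator {a..b} s \<partial>lborel) + ennreal (D^2) * (\<integral>\<^sup>+s. kern u p t0 s * indicator {a..b} s \<partial>lborel)"
    by (subst nn_integral_add) (auto simp: nn_integral_cmult)
  also have "\<dots> < \<infinity>"
  proof -
    have "(\<integral>\<^sup>+s. kern u p t0 s * indicator {a..b} s \<partial>lborel) \<le> (\<integral>\<^sup>+s. kern u p t0 s \<partial>lborel)"
      by (intro nn_integral_mono) (auto simp: indicator_def)
    then have "(\<integral>\<^sup>+s. kern u p t0 s * indicator {a..b} s \<partial>lborel) < \<infinity>" using t0 by (simp add: less_top order_le_less_trans)
    moreover have "(\<integral>\<^sup>+s. ennreal (\<bar>u t0\<bar> + 1) * indicator {a..b} s \<partial>lborel) < \<infinity>"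
      by (simp add: nn_integral_cmult_indicator emeasure_lborel_Icc_eq ennreal_mult_less_top)
    ultimately show ?thesis by (simp add: ennreal_mult_less_top)
  qed
  finally show ?thesis unfolding set_integrable_def
    by (intro integrableI_bounded) auto
qed

definition Phi :: "(real \<Rightarrow> real) \<Rightarrow> real \<Rightarrow> nat \<Rightarrow> ennreal" where
  "Phi u p N = (\<integral>\<^sup>+t. \<integral>\<^sup>+s. kern u p t s * (if real N < \<bar>u t\<bar> \<or> real N < \<bar>u s\<bar> then 1 else 0) \<partial>lborel \<partial>lborel)"

lemma choose_N:
  fixes u :: "real \<Rightarrow> real"
  assumes p: "1 < p" and u[measurable]: "u \<in> borel_measurable borel"
    and fin: "(\<integral>\<^sup>+t. \<integral>\<^sup>+s. kern u p t s \<partial>lborel \<partial>lborel) < \<infinity>" and eta: "0 < \<eta>"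
  shows "\<exists>N. Phi u p N < ennreal \<eta>"
proof -
  define F where "F N z = kern u p (fst z) (snd z) * (if real N < \<bar>u (fst z)\<bar> \<or> real N < \<bar>u (snd z)\<bar> then 1 else 0)" for N :: nat and z
  have Fm[measurable]: "F N \<in> borel_measurable (lborel \<Otimes>\<^sub>M lborel)" for N
    unfolding F_def kern_def by measurable
  have PhiF: "Phi u p N = integral\<^sup>N (lborel \<Otimes>\<^sub>M lborel) (F N)" for N
    unfolding Phi_def using lborel.nn_integral_fst[OF Fm[of N]] by (simp add: F_def)
  have Km: "(\<lambda>z. kern u p (fst z) (snd z)) \<in> borel_measurable (lborel \<Otimes>\<^sub>M lborel)"
    by (rule kern_meas[OF u])
  have "integral\<^sup>N (lborel \<Otimes>\<^sub>M lborel) (\<lambda>z. kern u p (fst z) (snd z)) = (\<integral>\<^sup>+t. \<integral>\<^sup>+s. kern u p t s \<partial>lborel \<partial>lborel)"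
    using lborel.nn_integral_fst[OF Km] by simp
  then have totfin: "integral\<^sup>N (lborel \<Otimes>\<^sub>M lborel) (\<lambda>z. kern u p (fst z) (snd z)) < \<infinity>" using fin by simp
  have dec: "decseq F"
  proof (rule decseq_SucI)
    fix n show "F (Suc n) \<le> F n" unfolding le_fun_def F_def by (auto intro!: mult_left_mono)
  qed
  have ffin: "integral\<^sup>N (lborel \<Otimes>\<^sub>M lborel) (F N) < \<infinity>" for N
  proof -
    have "integral\<^sup>N (lborel \<Otimes>\<^sub>M lborel) (F N) \<le> integral\<^sup>N (lborel \<Otimes>\<^sub>M lborel) (\<lambda>z. kern u p (fst z) (snd z))"
      unfolding F_def by (intro nn_integral_mono) auto
    then show ?thesis using totfin by (simp add: order_le_less_trans)
  qed
  have inf0: "(INF N. F N z) = 0" for z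
  proof -
    define N0 where "N0 = nat \<lceil>\<bar>u (fst z)\<bar> + \<bar>u (snd z)\<bar>\<rceil>"
    have "\<bar>u (fst z)\<bar> + \<bar>u (snd z)\<bar> \<le> real N0" unfolding N0_def by (rule real_nat_ceiling_ge)
    then have "F N0 z = 0" unfolding F_def by auto
    then show ?thesis by (metis (mono_tags, lifting) INF_lower bot.extremum_uniqueI iso_tuple_UNIV_I bot_ennreal)
  qed
  have "(\<integral>\<^sup>+z. (INF N. F N z) \<partial>(lborel \<Otimes>\<^sub>M lborel)) = (INF N. integral\<^sup>N (lborel \<Otimes>\<^sub>M lborel) (F N))"
    by (rule nn_integral_monotone_convergence_INF_decseq[OF dec Fm ffin])
  then have "(INF N. Phi u p N) = 0" unfolding PhiF inf0 by simp
  then have "(INF N. Phi u p N) < ennreal \<eta>" using eta by simp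
  then show ?thesis by (simp add: INF_less_iff)
qed

lemma lip_resid: "\<bar>(a - trunc N a) - (b - trunc N b)\<bar> \<le> \<bar>a - b\<bar>"
  unfolding trunc_def by (auto simp: max_def min_def abs_if)

lemma kern_resid:
  assumes p: "1 < p" and N: "0 \<le> N"
  shows "kern (\<lambda>t. u t - trunc N (u t)) p t s \<le> kern u p t s * (if N < \<bar>u t\<bar> \<or> N < \<bar>u s\<bar> then 1 else 0)"
proof (cases "N < \<bar>u t\<bar> \<or> N < \<bar>u s\<bar>")
  case True
  then show ?thesis using kern_mono[OF p, of "\<lambda>t. u t - trunc N (u t)" t s u] lip_resid by simp
next
  case False
  then have "u t - trunc N (u t) = 0" "u s - trunc N (u s) = 0" using trunc_eq by auto
  then show ?thesis using p unfolding kern_def by simp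
qed

lemma En_resid:
  fixes u :: "real \<Rightarrow> real"
  assumes p: "1 < p" and u[measurable]: "u \<in> borel_measurable borel"
  shows "En (\<lambda>t. u t - trunc (real N) (u t)) p A B \<le> Phi u p N"
  unfolding En_def Phi_def
proof (rule nn_integral_mono)
  fix t
  have "(\<integral>\<^sup>+s. kern (\<lambda>t. u t - trunc (real N) (u t)) p t s * indicator B s \<partial>lborel)
      \<le> (\<integral>\<^sup>+s. kern u p t s * (if real N < \<bar>u t\<bar> \<or> real N < \<bar>u s\<bar> then 1 else 0) \<partial>lborel)"
    by (intro nn_integral_mono order.trans[OF _ kern_resid[OF p]]) (auto simp: indicator_def)
  then show "(\<integral>\<^sup>+s. kern (\<lambda>t. u t - trunc (real N) (u t)) p t s * indicator B s \<partial>lborel) * indicator A t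
      \<le> (\<integral>\<^sup>+s. kern u p t s * (if real N < \<bar>u t\<bar> \<or> real N < \<bar>u s\<bar> then 1 else 0) \<partial>lborel)"
    by (rule order.trans[rotated]) (simp add: indicator_def)
qed

theorem proposition2p3:
  fixes p :: real and w :: "real \<Rightarrow> real"
  assumes "1 < p"
    and "is_weight w"
    and "AE t in lborel. 0 < w t"
    and "(\<lambda>t. ln (w t)) \<in> Bp_real p"
  shows "in_BMO_closure_Linf (\<lambda>t. ln (w t)) \<and> w \<in> A_2 \<and> w \<in> A_infty"
proof -
  note p = assms(1)
  define u where "u = (\<lambda>t. ln (w t))"
  from assms(4) have um[measurable]: "u \<in> borel_measurable borel"
    and fin0: "(\<integral>\<^sup>+t. \<integral>\<^sup>+s. ennreal (\<bar>u t - u s\<bar> powr p / \<bar>t - s\<bar>\<^sup>2) \<partial>lborel \<partial>lborel) < \<infinity>"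
    unfolding Bp_real_def u_def by auto
  have fin: "(\<integral>\<^sup>+t. \<integral>\<^sup>+s. kern u p t s \<partial>lborel \<partial>lborel) < \<infinity>" using fin0 unfolding kern_def .
  have ui: "set_integrable lborel {a..b} u" for a b by (rule loc_int_energy[OF p um fin])
  define g where "g N t = trunc (real N) (u t)" for N :: nat and t
  define h where "h N t = u t - g N t" for N :: nat and t
  have h_eq: "h N = (\<lambda>t. u t - g N t)" for N by (rule ext) (simp add: h_def)
  have gm[measurable]: "g N \<in> borel_measurable borel" for N unfolding g_def by measurable
  have hm[measurable]: "h N \<in> borel_measurable borel" for N unfolding h_def by measurable
  have gb: "\<bar>g N t\<bar> \<le> real N" for N t unfolding g_def by (rule trunc_bnd) simp
  have hi: "set_integrable lborel {a..b} (h N)" for N a b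
    unfolding h_eq using ui bdd_set_integrable[OF gm gb] by (rule set_integral_diff)
  have hEn: "En (h N) p A B \<le> Phi u p N" for N A B
    unfolding h_eq g_def by (rule En_resid[OF p um])
  have partA: "in_BMO_closure_Linf u"
    unfolding in_BMO_closure_Linf_def
  proof (intro conjI allI impI)
    show "loc_integrable u" unfolding loc_integrable_def using ui by blast
    fix \<epsilon> :: real assume \<epsilon>: "0 < \<epsilon>"
    define \<eta> where "\<eta> = (\<epsilon> / 4) powr p"
    have \<eta>: "0 < \<eta>" unfolding \<eta>_def using \<epsilon> by simp
    have \<eta>p: "\<eta> powr (1/p) = \<epsilon> / 4" unfolding \<eta>_def using \<epsilon> p by (simp add: powr_powr)
    obtain N where N: "Phi u p N < ennreal \<eta>" using choose_N[OF p um fin \<eta>] by blast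
    have enb: "En (h N) p A B \<le> ennreal \<eta>" for A B using hEn[of N A B] N by simp
    have osc: "mean_osc (h N) a b \<le> \<epsilon> / 2" if ab: "a < b" for a b
    proof -
      have "mean_osc (h N) a b \<le> 2 * enn2real (En (h N) p {a..b} {a..b}) powr (1/p)"
        by (rule mean_osc_bound[OF p ab hi hm En_fin[OF enb]])
      also have "enn2real (En (h N) p {a..b} {a..b}) powr (1/p) \<le> \<eta> powr (1/p)"
        using En_le_real[OF enb] \<eta> p by (intro powr_mono2) auto
      finally show ?thesis using \<eta>p by simp
    qed
    show "\<exists>g. g \<in> borel_measurable lborel \<and> bounded (range g) \<and> loc_integrable (\<lambda>t. u t - g t) \<and>
        bmo_norm (\<lambda>t. u t - g t) < ereal \<epsilon>"
    proof (intro exI conjI)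
      show "g N \<in> borel_measurable lborel" by simp
      have "range (g N) \<subseteq> cball 0 (real N)" using gb by (auto simp: dist_real_def)
      then show "bounded (range (g N))" by (rule bounded_subset[OF bounded_cball])
      show "loc_integrable (\<lambda>t. u t - g N t)" unfolding loc_integrable_def using hi h_eq by metis
      have "bmo_norm (h N) \<le> ereal (\<epsilon> / 2)"
        unfolding bmo_norm_def
      proof (rule SUP_least)
        fix I :: "real \<times> real" assume "I \<in> {(a, b). a < b}"
        then obtain a b where I: "I = (a, b)" "a < b" by auto
        have "mean_osc (h N) a b \<le> \<epsilon> / 2" by (rule osc[OF I(2)])
        then show "ereal (mean_osc (h N) (fst I) (snd I)) \<le> ereal (\<epsilon> / 2)" unfolding I by simp
      qed
      also have "\<dots> < ereal \<epsilon>" using \<epsilon> by simp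
      finally show "bmo_norm (\<lambda>t. u t - g N t) < ereal \<epsilon>" unfolding h_eq .
    qed
  qed
  define \<delta> where "\<delta> = min 1 ((2 powr (1/p) - 1) / 2)"
  have "2 powr 0 < 2 powr (1/p)" using p by (intro powr_less_mono) auto
  then have \<delta>: "0 < \<delta>" unfolding \<delta>_def by simp
  define \<eta> where "\<eta> = (\<delta> / 2) powr p / 4"
  have \<eta>: "0 < \<eta>" unfolding \<eta>_def using \<delta> by simp
  have \<eta>4: "(4 * \<eta>) powr (1/p) = \<delta> / 2" unfolding \<eta>_def using \<delta> p by (simp add: powr_powr)
  have sm1: "2 * (4 * \<eta>) powr (1/p) \<le> 1" and sm2: "2 * (4 * \<eta>) powr (1/p) \<le> (2 powr (1/p) - 1) / 2"
  proof -
    have "\<delta> \<le> 1" unfolding \<delta>_def by (rule min.cobounded1)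
    moreover have "\<delta> \<le> (2 powr (1/p) - 1) / 2" unfolding \<delta>_def by (rule min.cobounded2)
    ultimately show "2 * (4 * \<eta>) powr (1/p) \<le> 1" "2 * (4 * \<eta>) powr (1/p) \<le> (2 powr (1/p) - 1) / 2"
      unfolding \<eta>4 by auto
  qed
  obtain N where N: "Phi u p N < ennreal \<eta>" using choose_N[OF p um fin \<eta>] by blast
  have enb: "En (h N) p {a..b} {c..d} \<le> ennreal \<eta>" for a b c d using hEn[of N] N by (meson less_imp_le order.trans)
  define C0 where "C0 = 1 + Kc p * \<eta> powr (1/p)"
  have C0: "0 \<le> C0" unfolding C0_def using Kc_pos[of p] p by simp
  have F1: "(\<integral>\<^sup>+t. ennreal (exp (h N t - mean_on (h N) a b)) * indicator {a..b} t \<partial>lborel) \<le> ennreal ((b - a) * C0)"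
    if ab: "a < b" for a b
    unfolding C0_def using \<eta> by (intro fatou_exp[OF p hm hi enb _ sm1 sm2 ab]) auto
  have nhm[measurable]: "(\<lambda>t. - h N t) \<in> borel_measurable borel" by measurable
  have nhi: "set_integrable lborel {a..b} (\<lambda>t. - h N t)" for a b
    using set_integrable_mult_right[OF hi[of a b N], of "-1"] by simp
  have nenb: "En (\<lambda>t. - h N t) p {a..b} {c..d} \<le> ennreal \<eta>" for a b c d using enb by (simp add: En_neg)
  have nmean: "mean_on (\<lambda>t. - h N t) a b = - mean_on (h N) a b" for a b
    unfolding mean_on_def using set_integral_uminus[OF hi[of a b N]] by simp
  have F2: "(\<integral>\<^sup>+t. ennreal (exp (mean_on (h N) a b - h N t)) * indicator {a..b} t \<partial>lborel) \<le> ennreal ((b - a) * C0)"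
    if ab: "a < b" for a b
    using fatou_exp[OF p nhm nhi nenb _ sm1 sm2 ab] \<eta> unfolding C0_def nmean by simp
  have AEw: "AE t in lborel. 0 < w t" by (rule assms(3))
  have wi: "set_integrable lborel {a..b} w" for a b using assms(2) unfolding is_weight_def loc_integrable_def by blast
  have wnn: "0 \<le> w t" for t using assms(2) unfolding is_weight_def by blast
  have partB: "w \<in> A_2"
    unfolding A_p_def mem_Collect_eq
  proof (intro conjI exI allI impI)
    show "is_weight w" by (rule assms(2))
    fix a b :: real assume ab: "a < b"
    define m where "m = mean_on (h N) a b"
    have uexp: "w t = exp (u t)" if "0 < w t" for t using that unfolding u_def by simp
    have ugh: "u t = g N t + h N t" for t unfolding h_def by simp
    have "(\<integral>\<^sup>+t. ennreal (w t) * indicator {a..b} t \<partial>lborel)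
        \<le> (\<integral>\<^sup>+t. ennreal (exp (real N) * exp m) * (ennreal (exp (h N t - m)) * indicator {a..b} t) \<partial>lborel)"
    proof (rule nn_integral_mono_AE)
      show "AE t in lborel. ennreal (w t) * indicator {a..b} t
          \<le> ennreal (exp (real N) * exp m) * (ennreal (exp (h N t - m)) * indicator {a..b} t)"
        using AEw
      proof eventually_elim
        case (elim t)
        have "w t = exp (g N t + m + (h N t - m))"
          using uexp[OF elim] ugh[of t] by simp
        also have "\<dots> = exp (g N t) * exp m * exp (h N t - m)" by (simp only: exp_add)
        finally have "w t = exp (g N t) * exp m * exp (h N t - m)" .
        also have "\<dots> \<le> exp (real N) * exp m * exp (h N t - m)"
          using gb[of N t] by (intro mult_right_mono) (auto simp: abs_le_iff)
        finally have "ennreal (w t) \<le> ennreal (exp (real N) * exp m) * ennreal (exp (h N t - m))"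
          by (simp add: ennreal_mult[symmetric] ennreal_leI)
        then show ?case by (simp add: indicator_def mult.assoc)
      qed
    qed
    also have "\<dots> = ennreal (exp (real N) * exp m) * (\<integral>\<^sup>+t. ennreal (exp (h N t - m)) * indicator {a..b} t \<partial>lborel)"
      by (rule nn_integral_cmult) measurable
    also have "\<dots> \<le> ennreal (exp (real N) * exp m) * ennreal ((b - a) * C0)"
      using F1[OF ab] unfolding m_def by (rule mult_left_mono) simp
    also have "\<dots> = ennreal (exp (real N) * exp m * ((b - a) * C0))"
      using ab C0 by (simp add: ennreal_mult[symmetric])
    finally have wb: "(\<integral>\<^sup>+t. ennreal (w t) * indicator {a..b} t \<partial>lborel) \<le> ennreal (exp (real N) * exp m * ((b - a) * C0))" .
    have "ennreal (LBINT t:{a..b}. w t) = (\<integral>\<^sup>+t. ennreal (indicator {a..b} t * w t) \<partial>lborel)"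
      using wi[of a b] wnn unfolding set_integrable_def set_lebesgue_integral_def
      by (subst nn_integral_eq_integral) auto
    also have "\<dots> = (\<integral>\<^sup>+t. ennreal (w t) * indicator {a..b} t \<partial>lborel)"
      by (intro nn_integral_cong) (auto simp: indicator_def)
    finally have "ennreal (LBINT t:{a..b}. w t) \<le> ennreal (exp (real N) * exp m * ((b - a) * C0))" using wb by simp
    then have "(LBINT t:{a..b}. w t) \<le> exp (real N) * exp m * ((b - a) * C0)"
      using ab C0 by (subst (asm) ennreal_le_iff) auto
    then have M1: "mean_on w a b \<le> exp (real N) * exp m * C0"
      using ab unfolding mean_on_def by (simp add: divide_le_eq mult_ac)
    have M1nn: "0 \<le> mean_on w a b"
      unfolding mean_on_def set_lebesgue_integral_def using ab wnn
      by (intro divide_nonneg_pos Bochner_Integration.integral_nonneg) auto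
    have "(\<integral>\<^sup>+t\<in>{a..b}. dual_weight 2 w t \<partial>lborel)
        \<le> (\<integral>\<^sup>+t. ennreal (exp (real N) * exp (- m)) * (ennreal (exp (m - h N t)) * indicator {a..b} t) \<partial>lborel)"
    proof (rule nn_integral_mono_AE)
      show "AE t in lborel. dual_weight 2 w t * indicator {a..b} t
          \<le> ennreal (exp (real N) * exp (- m)) * (ennreal (exp (m - h N t)) * indicator {a..b} t)"
        using AEw
      proof eventually_elim
        case (elim t)
        have "w t powr (-1 / (2 - 1)) = exp (- u t)"
          using elim unfolding u_def by (simp add: powr_def)
        also have "\<dots> = exp (- g N t + - m + (m - h N t))"
          using ugh[of t] by simp
        also have "\<dots> = exp (- g N t) * exp (- m) * exp (m - h N t)" by (simp only: exp_add)
        also have "\<dots> \<le> exp (real N) * exp (- m) * exp (m - h N t)"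
          using gb[of N t] by (intro mult_right_mono) (auto simp: abs_le_iff)
        finally have "ennreal (w t powr (-1 / (2 - 1))) \<le> ennreal (exp (real N) * exp (- m)) * ennreal (exp (m - h N t))"
          by (simp add: ennreal_mult[symmetric] ennreal_leI)
        then show ?case using elim by (simp add: dual_weight_def indicator_def mult.assoc)
      qed
    qed
    also have "\<dots> = ennreal (exp (real N) * exp (- m)) * (\<integral>\<^sup>+t. ennreal (exp (m - h N t)) * indicator {a..b} t \<partial>lborel)"
      by (rule nn_integral_cmult) measurable
    also have "\<dots> \<le> ennreal (exp (real N) * exp (- m)) * ennreal ((b - a) * C0)"
      using F2[OF ab] unfolding m_def by (rule mult_left_mono) simp
    also have "\<dots> = ennreal (exp (real N) * exp (- m) * ((b - a) * C0))"
      using ab C0 by (simp add: ennreal_mult[symmetric])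
    finally have db: "(\<integral>\<^sup>+t\<in>{a..b}. dual_weight 2 w t \<partial>lborel) \<le> ennreal (exp (real N) * exp (- m) * ((b - a) * C0))" .
    then show "(\<integral>\<^sup>+t\<in>{a..b}. dual_weight 2 w t \<partial>lborel) < \<infinity>"
      by (simp add: order_le_less_trans)
    have "enn2real (\<integral>\<^sup>+t\<in>{a..b}. dual_weight 2 w t \<partial>lborel) \<le> exp (real N) * exp (- m) * ((b - a) * C0)"
      using db ab C0 by (intro enn2real_leI) auto
    then have M2: "enn2real (\<integral>\<^sup>+t\<in>{a..b}. dual_weight 2 w t \<partial>lborel) / (b - a) \<le> exp (real N) * exp (- m) * C0"
      using ab by (simp add: divide_le_eq mult_ac)
    have M2nn: "0 \<le> enn2real (\<integral>\<^sup>+t\<in>{a..b}. dual_weight 2 w t \<partial>lborel) / (b - a)" using ab by simp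
    have "mean_on w a b * (enn2real (\<integral>\<^sup>+t\<in>{a..b}. dual_weight 2 w t \<partial>lborel) / (b - a)) powr (2 - 1)
        = mean_on w a b * (enn2real (\<integral>\<^sup>+t\<in>{a..b}. dual_weight 2 w t \<partial>lborel) / (b - a))"
      using M2nn ab by simp
    also have "\<dots> \<le> (exp (real N) * exp m * C0) * (exp (real N) * exp (- m) * C0)"
      using M1 M2 M1nn M2nn by (intro mult_mono) auto
    also have "\<dots> = exp (real N) * exp (real N) * C0 * C0"
      by (simp add: exp_minus field_simps)
    finally show "mean_on w a b * (enn2real (\<integral>\<^sup>+t\<in>{a..b}. dual_weight 2 w t \<partial>lborel) / (b - a)) powr (2 - 1)
        \<le> exp (real N) * exp (real N) * C0 * C0" .
  qed
  have partC: "w \<in> A_infty"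
    unfolding A_infty_def using partB by (intro UN_I[of 2]) auto
  show ?thesis using partA partB partC unfolding u_def by blast
qed

end
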